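(* If $\mathcal{I},\mathcal{J}\subseteq\mathcal{B}_\Sigma$ are di-ideals, then $\mathcal{I}\star\mathcal{J}$ is a di-ideal.
   Context: Let $\mathbf{k}$ be a field of characteristic $0$ and $B=\bigoplus_{d\ge0}B_d$ a commutative graded $\mathbf{k}$-algebra with $B_0=\mathbf{k}$, generated by $B_1$, $\dim B_1<\infty$. Let $\mathcal{B}_\Sigma=\bigoplus_{n,d}\mathrm{Sym}^n(B_d)$ (the $\Sigma_n$-coinvariants of $B_d^{\otimes n}$), with product $\cdot$ given by multiplication in $\mathrm{Sym}(B_d)$ (zero between different $d$), and comultiplication $\Delta(w_1\cdots w_n)=\sum_{S\subseteq[n]}w_S\otimes w_{[n]\setminus S}$, $w_S=\prod_{i\in S}w_i$. Let $\mathcal{B}^\Sigma=\bigoplus_{n,d}(B_d^{\otimes n})^{\Sigma_n}$ with product $*:(B_d^{\otimes n})^{\Sigma_n}\otimes(B_e^{\otimes n})^{\Sigma_n}\to(B_{d+e}^{\otimes n})^{\Sigma_n}$ given by factorwise multiplication $(u_1\otimes\cdots\otimes u_n)*(v_1\otimes\cdots\otimes v_n)=u_1v_1\otimes\cdots\otimes u_nv_n$ (zero for different $n$). $\mathfrak{S}:\mathrm{Sym}^n(B_d)\to(B_d^{\otimes n})^{\Sigma_n}$, $w_1\cdots w_n\mapsto\sum_{\tau\in\Sigma_n}w_{\tau(1)}\otimes\cdots\otimes w_{\tau(n)}$, a linear isomorphism. An ideal of $\mathcal{B}_\Sigma$ is a bihomogeneous (in $(d,n)$) subspace closed under $\cdot$-multiplication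 by all elements of $\mathcal{B}_\Sigma$. An ideal $\mathcal{I}\subseteq\mathcal{B}_\Sigma$ is a di-ideal if $\mathfrak{S}(\mathcal{I})$ is an ideal with respect to $*$, i.e. $g*f\in\mathfrak{S}(\mathcal{I})$ for all $f\in\mathfrak{S}(\mathcal{I})$, $g\in\mathcal{B}^\Sigma$. The join $\mathcal{I}\star\mathcal{J}$ of ideals is defined by: $(\mathcal{I}\star\mathcal{J})_{d,n}$ is the kernel of $\mathrm{Sym}^n(B_d)\xrightarrow{\Delta}\bigoplus_{i=0}^n(\mathcal{B}_\Sigma/\mathcal{I})_{d,i}\otimes(\mathcal{B}_\Sigma/\mathcal{J})_{d,n-i}$. *)

theory Defs
  imports Main "HOL.Vector_Spaces" "HOL-Combinatorics.Permutations"
begin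

text \<open>B is a type 'b (a commutative ring with 1), with scalar multiplication sc by the
field 'k, and grading pieces Bd d.\<close>

definition std_graded_algebra :: "('k::field_char_0 \<Rightarrow> 'b::comm_ring_1 \<Rightarrow> 'b) \<Rightarrow> (nat \<Rightarrow> 'b set) \<Rightarrow> bool" where
  "std_graded_algebra sc Bd \<longleftrightarrow>
     vector_space sc
   \<and> (\<forall>c a b. sc c (a * b) = sc c a * b)
   \<and> (\<forall>d. module.subspace sc (Bd d))
   \<and> (\<forall>d e. \<forall>a\<in>Bd d. \<forall>b\<in>Bd e. a * b \<in> Bd (d + e))
   \<and> (\<forall>x. \<exists>!f. (\<forall>d. f d \<in> Bd d) \<and> finite {d. f d \<noteq> 0} \<and> x = (\<Sum>d\<in>{d. f d \<noteq> 0}. f d))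
   \<and> Bd 0 = range (\<lambda>c. sc c 1)
   \<and> (\<forall>x. x \<in> module.span sc (prod_list ` {xs. set xs \<subseteq> Bd 1}))
   \<and> (\<exists>S. finite S \<and> S \<subseteq> Bd 1 \<and> module.span sc S = Bd 1)"

text \<open>Linear functionals on B_d (values outside B_d are irrelevant).\<close>
definition Dual :: "('k::field_char_0 \<Rightarrow> 'b::comm_ring_1 \<Rightarrow> 'b) \<Rightarrow> (nat \<Rightarrow> 'b set) \<Rightarrow> nat \<Rightarrow> ('b \<Rightarrow> 'k) set" where
  "Dual sc Bd d = {\<phi>. (\<forall>x\<in>Bd d. \<forall>y\<in>Bd d. \<phi> (x + y) = \<phi> x + \<phi> y)
                    \<and> (\<forall>c. \<forall>x\<in>Bd d. \<phi> (sc c x) = c * \<phi> x)}"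

text \<open>A formal representative: a finite list of (coefficient, list of n vectors of B_d).\<close>
definition valid :: "(nat \<Rightarrow> 'b set) \<Rightarrow> nat \<Rightarrow> nat \<Rightarrow> ('k \<times> 'b list) list \<Rightarrow> bool" where
  "valid Bd d n r \<longleftrightarrow> (\<forall>(c, ws) \<in> set r. length ws = n \<and> set ws \<subseteq> Bd d)"

text \<open>The element sum c * w_1 ... w_n of Sym^n(B_d), as a polynomial function on the dual.\<close>
definition symel :: "('k::field_char_0 \<Rightarrow> 'b::comm_ring_1 \<Rightarrow> 'b) \<Rightarrow> (nat \<Rightarrow> 'b set) \<Rightarrow> nat \<Rightarrow> ('k \<times> 'b list) list \<Rightarrow> ('b \<Rightarrow> 'k) \<Rightarrow> 'k" where
  "symel sc Bd d r = (\<lambda>\<phi>. if \<phi> \<in> Dual sc Bd d then (\<Sum>(c, ws)\<leftarrow>r. c * prod_list (map \<phi> ws)) else 0)"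

definition SymP :: "('k::field_char_0 \<Rightarrow> 'b::comm_ring_1 \<Rightarrow> 'b) \<Rightarrow> (nat \<Rightarrow> 'b set) \<Rightarrow> nat \<Rightarrow> nat \<Rightarrow> (('b \<Rightarrow> 'k) \<Rightarrow> 'k) set" where
  "SymP sc Bd d n = {symel sc Bd d r | r. valid Bd d n r}"

text \<open>The element sum c * w_1 (x) ... (x) w_n of B_d^{tensor n}, as a multilinear form on the dual.\<close>
definition tensel :: "('k::field_char_0 \<Rightarrow> 'b::comm_ring_1 \<Rightarrow> 'b) \<Rightarrow> (nat \<Rightarrow> 'b set) \<Rightarrow> nat \<Rightarrow> nat \<Rightarrow> ('k \<times> 'b list) list \<Rightarrow> ('b \<Rightarrow> 'k) list \<Rightarrow> 'k" where
  "tensel sc Bd d n r = (\<lambda>\<phi>s. if length \<phi>s = n \<and> set \<phi>s \<subseteq> Dual sc Bd d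
      then (\<Sum>(c, ws)\<leftarrow>r. c * (\<Prod>i<n. (\<phi>s ! i) (ws ! i))) else 0)"

definition TensInv :: "('k::field_char_0 \<Rightarrow> 'b::comm_ring_1 \<Rightarrow> 'b) \<Rightarrow> (nat \<Rightarrow> 'b set) \<Rightarrow> nat \<Rightarrow> nat \<Rightarrow> (('b \<Rightarrow> 'k) list \<Rightarrow> 'k) set" where
  "TensInv sc Bd d n = {F. \<exists>r. valid Bd d n r \<and> F = tensel sc Bd d n r \<and>
      (\<forall>\<sigma>. \<sigma> permutes {..<n} \<longrightarrow> (\<forall>\<phi>s. length \<phi>s = n \<longrightarrow> F (map (\<lambda>i. \<phi>s ! \<sigma> i) [0..<n]) = F \<phi>s))}"

definition Simg :: "('k::field_char_0 \<Rightarrow> 'b::comm_ring_1 \<Rightarrow> 'b) \<Rightarrow> (nat \<Rightarrow> 'b set) \<Rightarrow> nat \<Rightarrow> nat \<Rightarrow> ('k \<times> 'b list) list \<Rightarrow> ('b \<Rightarrow> 'k) list \<Rightarrow> 'k" where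
  "Simg sc Bd d n r = (\<lambda>\<phi>s. if length \<phi>s = n \<and> set \<phi>s \<subseteq> Dual sc Bd d
      then (\<Sum>(c, ws)\<leftarrow>r. c * (\<Sum>\<tau>\<in>{\<tau>. \<tau> permutes {..<n}}. \<Prod>i<n. (\<phi>s ! i) (ws ! \<tau> i))) else 0)"

definition SI :: "('k::field_char_0 \<Rightarrow> 'b::comm_ring_1 \<Rightarrow> 'b) \<Rightarrow> (nat \<Rightarrow> 'b set)
    \<Rightarrow> (nat \<Rightarrow> nat \<Rightarrow> (('b \<Rightarrow> 'k) \<Rightarrow> 'k) set) \<Rightarrow> nat \<Rightarrow> nat \<Rightarrow> (('b \<Rightarrow> 'k) list \<Rightarrow> 'k) set" where
  "SI sc Bd I d n = {Simg sc Bd d n r | r. valid Bd d n r \<and> symel sc Bd d r \<in> I d n}"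

text \<open>Factorwise product of representatives: (u_1 (x)...(x) u_n) * (v_1 (x)...(x) v_n) = u_1v_1 (x)...\<close>
definition tprod :: "('k::times \<times> 'b::times list) list \<Rightarrow> ('k \<times> 'b list) list \<Rightarrow> ('k \<times> 'b list) list" where
  "tprod rg rf = concat (map (\<lambda>(c, us). map (\<lambda>(c', vs). (c * c', map2 (*) us vs)) rf) rg)"

text \<open>A bihomogeneous ideal of B_Sigma, given by its components I d n (a subspace of Sym^n(B_d)).\<close>
definition is_ideal :: "('k::field_char_0 \<Rightarrow> 'b::comm_ring_1 \<Rightarrow> 'b) \<Rightarrow> (nat \<Rightarrow> 'b set)
    \<Rightarrow> (nat \<Rightarrow> nat \<Rightarrow> (('b \<Rightarrow> 'k) \<Rightarrow> 'k) set) \<Rightarrow> bool" where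
  "is_ideal sc Bd I \<longleftrightarrow> (\<forall>d n.
      I d n \<subseteq> SymP sc Bd d n
    \<and> (\<lambda>_. 0) \<in> I d n
    \<and> (\<forall>x\<in>I d n. \<forall>y\<in>I d n. (\<lambda>\<phi>. x \<phi> + y \<phi>) \<in> I d n)
    \<and> (\<forall>c. \<forall>x\<in>I d n. (\<lambda>\<phi>. c * x \<phi>) \<in> I d n)
    \<and> (\<forall>m. \<forall>x\<in>I d n. \<forall>y\<in>SymP sc Bd d m. (\<lambda>\<phi>. y \<phi> * x \<phi>) \<in> I d (m + n)))"

definition di_ideal :: "('k::field_char_0 \<Rightarrow> 'b::comm_ring_1 \<Rightarrow> 'b) \<Rightarrow> (nat \<Rightarrow> 'b set)
    \<Rightarrow> (nat \<Rightarrow> nat \<Rightarrow> (('b \<Rightarrow> 'k) \<Rightarrow> 'k) set) \<Rightarrow> bool" where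
  "di_ideal sc Bd I \<longleftrightarrow> is_ideal sc Bd I \<and>
     (\<forall>d e n rf rg. valid Bd d n rf \<longrightarrow> tensel sc Bd d n rf \<in> SI sc Bd I d n \<longrightarrow>
        valid Bd e n rg \<longrightarrow> tensel sc Bd e n rg \<in> TensInv sc Bd e n \<longrightarrow>
        tensel sc Bd (e + d) n (tprod rg rf) \<in> SI sc Bd I (e + d) n)"

text \<open>Component of bidegree (i, n-i) of the coproduct of the element represented by r,
  as a function on pairs of dual vectors.\<close>
definition Dcomp :: "('k::field_char_0 \<Rightarrow> 'b::comm_ring_1 \<Rightarrow> 'b) \<Rightarrow> (nat \<Rightarrow> 'b set) \<Rightarrow> nat \<Rightarrow> nat \<Rightarrow> nat
    \<Rightarrow> ('k \<times> 'b list) list \<Rightarrow> ('b \<Rightarrow> 'k) \<times> ('b \<Rightarrow> 'k) \<Rightarrow> 'k" where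
  "Dcomp sc Bd d n i r = (\<lambda>(\<phi>, \<psi>). if \<phi> \<in> Dual sc Bd d \<and> \<psi> \<in> Dual sc Bd d then
      (\<Sum>(c, ws)\<leftarrow>r. c * (\<Sum>S\<in>{S. S \<subseteq> {..<n} \<and> card S = i}.
          (\<Prod>k\<in>S. \<phi> (ws ! k)) * (\<Prod>k\<in>{..<n} - S. \<psi> (ws ! k)))) else 0)"

text \<open>A \<otimes> B as functions on pairs, and finite linear spans.\<close>
definition tens2 :: "(('b \<Rightarrow> 'k) \<Rightarrow> 'k::comm_ring_1) set \<Rightarrow> (('b \<Rightarrow> 'k) \<Rightarrow> 'k) set \<Rightarrow> (('b \<Rightarrow> 'k) \<times> ('b \<Rightarrow> 'k) \<Rightarrow> 'k) set" where
  "tens2 A B = {(\<lambda>(\<phi>, \<psi>). a \<phi> * b \<psi>) | a b. a \<in> A \<and> b \<in> B}"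

definition spanF :: "('x \<Rightarrow> 'k::comm_ring_1) set \<Rightarrow> ('x \<Rightarrow> 'k) set" where
  "spanF X = {f. \<exists>xs. set (map snd xs) \<subseteq> X \<and> f = (\<lambda>z. \<Sum>(c, g)\<leftarrow>xs. c * g z)}"

text \<open>The join: kernel of Sym^n(B_d) -> sum_i (B_Sigma/I)_{d,i} (x) (B_Sigma/J)_{d,n-i},
  i.e. the elements whose (i,n-i)-coproduct component lies in I_{d,i} (x) Sym^{n-i} + Sym^i (x) J_{d,n-i}.\<close>
definition join :: "('k::field_char_0 \<Rightarrow> 'b::comm_ring_1 \<Rightarrow> 'b) \<Rightarrow> (nat \<Rightarrow> 'b set)
    \<Rightarrow> (nat \<Rightarrow> nat \<Rightarrow> (('b \<Rightarrow> 'k) \<Rightarrow> 'k) set) \<Rightarrow> (nat \<Rightarrow> nat \<Rightarrow> (('b \<Rightarrow> 'k) \<Rightarrow> 'k) set)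
    \<Rightarrow> nat \<Rightarrow> nat \<Rightarrow> (('b \<Rightarrow> 'k) \<Rightarrow> 'k) set" where
  "join sc Bd I J d n = {x \<in> SymP sc Bd d n. \<forall>r. valid Bd d n r \<longrightarrow> symel sc Bd d r = x \<longrightarrow>
      (\<forall>i\<le>n. Dcomp sc Bd d n i r \<in>
         spanF (tens2 (I d i) (SymP sc Bd d (n - i)) \<union> tens2 (SymP sc Bd d i) (J d (n - i))))}"

end

theory Submission
  imports Defs "HOL-Computational_Algebra.Polynomial" "HOL-Library.FuncSet"
begin

lemma prod_list_map_nth:
  assumes "length ws = n"
  shows "prod_list (map f ws) = (\<Prod>k<n. f (ws ! k))"
  using assms by (simp add: prod.list_conv_set_nth atLeast0LessThan)

lemma prod_expand:
  fixes t :: "'k::comm_ring_1"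
  shows "(\<Prod>k<n. t * a k + b k) =
    (\<Sum>i\<le>n. t ^ i * (\<Sum>S\<in>{S. S \<subseteq> {..<n} \<and> card S = i}. (\<Prod>k\<in>S. a k) * (\<Prod>k\<in>{..<n} - S. b k)))"
proof -
  have "(\<Prod>k<n. t * a k + b k) = (\<Sum>X\<in>Pow {..<n}. (\<Prod>k\<in>X. t * a k) * (\<Prod>k\<in>{..<n}-X. b k))"
    by (rule prod_add) simp
  also have "\<dots> = (\<Sum>X\<in>Pow {..<n}. t ^ card X * ((\<Prod>k\<in>X. a k) * (\<Prod>k\<in>{..<n}-X. b k)))"
    by (simp add: prod.distrib mult.assoc)
  also have "\<dots> = (\<Sum>i\<le>n. \<Sum>X\<in>{X. X \<in> Pow {..<n} \<and> card X = i}. t ^ card X * ((\<Prod>k\<in>X. a k) * (\<Prod>k\<in>{..<n}-X. b k)))"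
  proof (rule sum.group[symmetric])
    show "card ` Pow {..<n} \<subseteq> {..n}"
      using card_mono[of "{..<n}"] by fastforce
  qed auto
  also have "\<dots> = (\<Sum>i\<le>n. t ^ i * (\<Sum>S\<in>{S. S \<subseteq> {..<n} \<and> card S = i}. (\<Prod>k\<in>S. a k) * (\<Prod>k\<in>{..<n} - S. b k)))"
    by (auto simp: sum_distrib_left intro!: sum.cong)
  finally show ?thesis .
qed

definition Dpoly where
  "Dpoly sc Bd d n r \<phi> \<psi> = (\<Sum>i\<le>n. monom (Dcomp sc Bd d n i r (\<phi>, \<psi>)) i)"

lemma Dual_lin_comb:
  assumes "\<phi> \<in> Dual sc Bd d" "\<psi> \<in> Dual sc Bd d"
  shows "(\<lambda>x. t * \<phi> x + \<psi> x) \<in> Dual sc Bd d"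
  using assms by (simp add: Dual_def algebra_simps)

lemma Dcomp_Cons:
  "Dcomp sc Bd d n i ((c, ws) # r) (\<phi>, \<psi>) = (if \<phi> \<in> Dual sc Bd d \<and> \<psi> \<in> Dual sc Bd d then
      c * (\<Sum>S\<in>{S. S \<subseteq> {..<n} \<and> card S = i}. (\<Prod>k\<in>S. \<phi> (ws ! k)) * (\<Prod>k\<in>{..<n} - S. \<psi> (ws ! k))) else 0)
     + Dcomp sc Bd d n i r (\<phi>, \<psi>)"
  by (simp add: Dcomp_def)

lemma Dcomp_Nil: "Dcomp sc Bd d n i [] = (\<lambda>_. 0)"
  by (auto simp add: Dcomp_def)

lemma symel_Cons:
  "symel sc Bd d ((c, ws) # r) \<phi> = (if \<phi> \<in> Dual sc Bd d then c * prod_list (map \<phi> ws) else 0) + symel sc Bd d r \<phi>"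
  by (simp add: symel_def)

lemma symel_Nil: "symel sc Bd d [] = (\<lambda>_. 0)"
  by (auto simp add: symel_def)

lemma valid_Cons: "valid Bd d n ((c, ws) # r) \<longleftrightarrow> length ws = n \<and> set ws \<subseteq> Bd d \<and> valid Bd d n r"
  by (auto simp: valid_def)

lemma poly_Dpoly:
  assumes "\<phi> \<in> Dual sc Bd d" "\<psi> \<in> Dual sc Bd d" "valid Bd d n r"
  shows "poly (Dpoly sc Bd d n r \<phi> \<psi>) t = symel sc Bd d r (\<lambda>x. t * \<phi> x + \<psi> x)"
  using assms(3)
proof (induction r)
  case Nil
  then show ?case by (simp add: Dpoly_def Dcomp_Nil symel_Nil poly_sum)
next
  case (Cons a r)
  obtain c ws where a: "a = (c, ws)" by fastforce
  with Cons.prems have len: "length ws = n" and vr: "valid Bd d n r" by (auto simp: valid_Cons)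
  define E where "E = (\<lambda>i. \<Sum>S\<in>{S. S \<subseteq> {..<n} \<and> card S = i}. (\<Prod>k\<in>S. \<phi> (ws ! k)) * (\<Prod>k\<in>{..<n} - S. \<psi> (ws ! k)))"
  define D where "D = (\<lambda>i. Dcomp sc Bd d n i r (\<phi>, \<psi>))"
  have DC: "Dcomp sc Bd d n i (a # r) (\<phi>, \<psi>) = c * E i + D i" for i
    using assms(1,2) by (simp add: a Dcomp_Cons E_def D_def)
  have "poly (Dpoly sc Bd d n (a # r) \<phi> \<psi>) t = (\<Sum>i\<le>n. (c * E i + D i) * t ^ i)"
    by (simp add: Dpoly_def poly_sum poly_monom DC)
  also have "\<dots> = c * (\<Sum>i\<le>n. t ^ i * E i) + (\<Sum>i\<le>n. D i * t ^ i)"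
    unfolding sum_distrib_left sum.distrib[symmetric] by (rule sum.cong) (simp_all add: algebra_simps)
  also have "(\<Sum>i\<le>n. t ^ i * E i) = (\<Prod>k<n. t * \<phi> (ws ! k) + \<psi> (ws ! k))"
    unfolding E_def by (rule prod_expand[symmetric])
  also have "\<dots> = prod_list (map (\<lambda>x. t * \<phi> x + \<psi> x) ws)"
    using len by (simp add: prod_list_map_nth)
  also have "(\<Sum>i\<le>n. D i * t ^ i) = poly (Dpoly sc Bd d n r \<phi> \<psi>) t"
    by (simp add: Dpoly_def poly_sum poly_monom D_def)
  finally have calc: "poly (Dpoly sc Bd d n (a # r) \<phi> \<psi>) t = c * prod_list (map (\<lambda>x. t * \<phi> x + \<psi> x) ws) + poly (Dpoly sc Bd d n r \<phi> \<psi>) t" .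
  have S: "symel sc Bd d (a # r) (\<lambda>x. t * \<phi> x + \<psi> x) = c * prod_list (map (\<lambda>x. t * \<phi> x + \<psi> x) ws) + symel sc Bd d r (\<lambda>x. t * \<phi> x + \<psi> x)"
    using Dual_lin_comb[OF assms(1,2), of t] unfolding a symel_Cons by simp
  show ?case unfolding S calc Cons.IH[OF vr] ..
qed

lemma Dcomp_big:
  assumes "n < i"
  shows "Dcomp sc Bd d n i r = (\<lambda>_. 0)"
proof -
  have E: "{S. S \<subseteq> {..<n} \<and> card S = i} = {}"
  proof (rule ccontr)
    assume "{S. S \<subseteq> {..<n} \<and> card S = i} \<noteq> {}"
    then obtain S where "S \<subseteq> {..<n}" "card S = i" by blast
    then have "i \<le> n" using card_mono[OF finite_lessThan, of S n] by simp
    then show False using assms by simp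
  qed
  show ?thesis
  proof (induction r)
    case Nil
    then show ?case by (rule Dcomp_Nil)
  next
    case (Cons a r)
    obtain c ws where a: "a = (c, ws)" by fastforce
    show ?case
    proof (rule ext, clarify)
      fix \<phi> \<psi>
      show "Dcomp sc Bd d n i (a # r) (\<phi>, \<psi>) = 0"
        unfolding a Dcomp_Cons E using Cons.IH by simp
    qed
  qed
qed

lemma coeff_Dpoly:
  "coeff (Dpoly sc Bd d n r \<phi> \<psi>) i = Dcomp sc Bd d n i r (\<phi>, \<psi>)"
  by (cases "i \<le> n") (auto simp: Dpoly_def coeff_sum coeff_monom Dcomp_big)

lemma Dcomp_welldef:
  assumes "valid Bd d n r1" "valid Bd d n r2" "symel sc Bd d r1 = symel sc Bd d r2"
  shows "Dcomp sc Bd d n i r1 = Dcomp sc Bd d n i r2"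
proof (rule ext, clarify)
  fix \<phi> \<psi>
  show "Dcomp sc Bd d n i r1 (\<phi>, \<psi>) = Dcomp sc Bd d n i r2 (\<phi>, \<psi>)"
  proof (cases "\<phi> \<in> Dual sc Bd d \<and> \<psi> \<in> Dual sc Bd d")
    case True
    then have "poly (Dpoly sc Bd d n r1 \<phi> \<psi>) = poly (Dpoly sc Bd d n r2 \<phi> \<psi>)"
      using assms by (auto simp: poly_Dpoly)
    then have "Dpoly sc Bd d n r1 \<phi> \<psi> = Dpoly sc Bd d n r2 \<phi> \<psi>"
      by (simp add: poly_eq_poly_eq_iff)
    then show ?thesis by (metis coeff_Dpoly)
  next
    case False
    then show ?thesis unfolding Dcomp_def by auto
  qed
qed

lemma spanF_zero: "(\<lambda>_. 0) \<in> spanF X"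
  unfolding spanF_def by (rule CollectI, rule exI[of _ "[]"]) auto

lemma spanF_gen: "g \<in> X \<Longrightarrow> g \<in> spanF X"
  unfolding spanF_def by (rule CollectI, rule exI[of _ "[(1, g)]"]) auto

lemma spanF_step:
  assumes "g \<in> X" "h \<in> spanF X"
  shows "(\<lambda>z. c * g z + h z) \<in> spanF X"
proof -
  from assms(2) obtain xs where xs: "set (map snd xs) \<subseteq> X" "h = (\<lambda>z. \<Sum>(c, g)\<leftarrow>xs. c * g z)"
    unfolding spanF_def by blast
  show ?thesis unfolding spanF_def
    by (rule CollectI, rule exI[of _ "(c, g) # xs"]) (use xs assms(1) in auto)
qed

lemma spanF_induct:
  assumes "f \<in> spanF X"
    and "P (\<lambda>_. 0)"
    and "\<And>g c h. g \<in> X \<Longrightarrow> h \<in> spanF X \<Longrightarrow> P h \<Longrightarrow> P (\<lambda>z. c * g z + h z)"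
  shows "P f"
proof -
  from assms(1) obtain xs where xs: "set (map snd xs) \<subseteq> X" "f = (\<lambda>z. \<Sum>(c, g)\<leftarrow>xs. c * g z)"
    unfolding spanF_def by blast
  have "(\<lambda>z. \<Sum>(c, g)\<leftarrow>xs. c * g z) \<in> spanF X \<and> P (\<lambda>z. \<Sum>(c, g)\<leftarrow>xs. c * g z)"
    using xs(1)
  proof (induction xs)
    case Nil
    then show ?case using assms(2) spanF_zero by simp
  next
    case (Cons a xs)
    obtain c g where a: "a = (c, g)" by fastforce
    from Cons have g: "g \<in> X" and IH: "(\<lambda>z. \<Sum>(c, g)\<leftarrow>xs. c * g z) \<in> spanF X \<and> P (\<lambda>z. \<Sum>(c, g)\<leftarrow>xs. c * g z)"
      by (auto simp: a)
    show ?case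
      using spanF_step[OF g conjunct1[OF IH], of c] assms(3)[OF g conjunct1[OF IH] conjunct2[OF IH], of c]
      by (simp add: a)
  qed
  then show ?thesis using xs(2) by simp
qed

lemma spanF_add:
  assumes "f \<in> spanF X" "g \<in> spanF X"
  shows "(\<lambda>z. f z + g z) \<in> spanF X"
proof (rule spanF_induct[of f X "\<lambda>f. (\<lambda>z. f z + g z) \<in> spanF X", OF assms(1)])
  show "(\<lambda>z. 0 + g z) \<in> spanF X" using assms(2) by simp
next
  fix g' c h
  assume "g' \<in> X" "h \<in> spanF X" "(\<lambda>z. h z + g z) \<in> spanF X"
  then show "(\<lambda>z. c * g' z + h z + g z) \<in> spanF X"
    using spanF_step[of g' X "\<lambda>z. h z + g z" c] by (simp add: add.assoc)
qed

lemma spanF_scale: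
  assumes "f \<in> spanF X"
  shows "(\<lambda>z. c * f z) \<in> spanF X"
proof (rule spanF_induct[of f X "\<lambda>f. (\<lambda>z. c * f z) \<in> spanF X", OF assms(1)])
  show "(\<lambda>z. c * 0) \<in> spanF X" using spanF_zero by simp
next
  fix g c' h
  assume "g \<in> X" "h \<in> spanF X" "(\<lambda>z. c * h z) \<in> spanF X"
  then show "(\<lambda>z. c * (c' * g z + h z)) \<in> spanF X"
    using spanF_step[of g X "\<lambda>z. c * h z" "c * c'"] by (simp add: algebra_simps)
qed

lemma spanF_sum:
  assumes "\<And>a. a \<in> A \<Longrightarrow> f a \<in> spanF X"
  shows "(\<lambda>z. \<Sum>a\<in>A. f a z) \<in> spanF X"
proof (cases "finite A")
  case True
  then show ?thesis using assms
  proof (induction A rule: finite_induct)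
    case empty
    then show ?case using spanF_zero by simp
  next
    case (insert x F)
    then show ?case using spanF_add[of "f x" X "\<lambda>z. \<Sum>a\<in>F. f a z"] by simp
  qed
next
  case False
  then show ?thesis using spanF_zero by simp
qed

lemma spanF_sum_list:
  assumes "\<And>a. a \<in> set L \<Longrightarrow> f a \<in> spanF X"
  shows "(\<lambda>z. \<Sum>a\<leftarrow>L. f a z) \<in> spanF X"
  using assms
proof (induction L)
  case Nil
  then show ?case using spanF_zero by simp
next
  case (Cons a L)
  then show ?case using spanF_add[of "f a" X "\<lambda>z. \<Sum>a\<leftarrow>L. f a z"] by simp
qed

lemma spanF_mono: "X \<subseteq> Y \<Longrightarrow> f \<in> spanF X \<Longrightarrow> f \<in> spanF Y"
  unfolding spanF_def by blast

lemma spanF_mult: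
  assumes "f \<in> spanF X" "g \<in> spanF Y"
    and gen: "\<And>a b. a \<in> X \<Longrightarrow> b \<in> Y \<Longrightarrow> (\<lambda>z. a z * b z) \<in> spanF Z"
  shows "(\<lambda>z. f z * g z) \<in> spanF Z"
proof (rule spanF_induct[of f X "\<lambda>f. (\<lambda>z. f z * g z) \<in> spanF Z", OF assms(1)])
  show "(\<lambda>z. 0 * g z) \<in> spanF Z" using spanF_zero by simp
next
  fix a c h
  assume a: "a \<in> X" and "h \<in> spanF X" and h: "(\<lambda>z. h z * g z) \<in> spanF Z"
  have ag: "(\<lambda>z. a z * g z) \<in> spanF Z"
  proof (rule spanF_induct[of g Y "\<lambda>g. (\<lambda>z. a z * g z) \<in> spanF Z", OF assms(2)])
    show "(\<lambda>z. a z * 0) \<in> spanF Z" using spanF_zero by simp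
  next
    fix b c' h'
    assume b: "b \<in> Y" and "h' \<in> spanF Y" and h': "(\<lambda>z. a z * h' z) \<in> spanF Z"
    have "(\<lambda>z. c' * (a z * b z) + a z * h' z) \<in> spanF Z"
      using spanF_add[OF spanF_scale[OF gen[OF a b]] h'] .
    then show "(\<lambda>z. a z * (c' * b z + h' z)) \<in> spanF Z" by (simp add: algebra_simps)
  qed
  have "(\<lambda>z. c * (a z * g z) + h z * g z) \<in> spanF Z"
    using spanF_add[OF spanF_scale[OF ag] h] .
  then show "(\<lambda>z. (c * a z + h z) * g z) \<in> spanF Z" by (simp add: algebra_simps)
qed

lemma spanF_subst:
  assumes "f \<in> spanF X"
    and gen: "\<And>g. g \<in> X \<Longrightarrow> (\<lambda>z. if Q z then g (m z) else 0) \<in> spanF Y"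
  shows "(\<lambda>z. if Q z then f (m z) else 0) \<in> spanF Y"
proof (rule spanF_induct[of f X "\<lambda>f. (\<lambda>z. if Q z then f (m z) else 0) \<in> spanF Y", OF assms(1)])
  show "(\<lambda>z. if Q z then 0 else 0) \<in> spanF Y" using spanF_zero by simp
next
  fix g c h
  assume g: "g \<in> X" and "h \<in> spanF X" and h: "(\<lambda>z. if Q z then h (m z) else 0) \<in> spanF Y"
  have "(\<lambda>z. c * (if Q z then g (m z) else 0) + (if Q z then h (m z) else 0)) \<in> spanF Y"
    using spanF_add[OF spanF_scale[OF gen[OF g]] h] .
  then show "(\<lambda>z. if Q z then c * g (m z) + h (m z) else 0) \<in> spanF Y"
    by (simp add: if_distrib cong: if_cong)
qed

definition rscale :: "'k::times \<Rightarrow> ('k \<times> 'b list) list \<Rightarrow> ('k \<times> 'b list) list" where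
  "rscale a r = map (\<lambda>(c, ws). (a * c, ws)) r"

definition rmul :: "('k::times \<times> 'b list) list \<Rightarrow> ('k \<times> 'b list) list \<Rightarrow> ('k \<times> 'b list) list" where
  "rmul r1 r2 = concat (map (\<lambda>(c, ws). map (\<lambda>(c', vs). (c * c', ws @ vs)) r2) r1)"

lemma valid_append: "valid Bd d n (r1 @ r2) \<longleftrightarrow> valid Bd d n r1 \<and> valid Bd d n r2"
  unfolding valid_def set_append ball_Un ..

lemma valid_Nil: "valid Bd d n []"
  by (simp add: valid_def)

lemma valid_rscale: "valid Bd d n r \<Longrightarrow> valid Bd d n (rscale a r)"
  by (auto simp: valid_def rscale_def)

lemma valid_rmul: "valid Bd d m r1 \<Longrightarrow> valid Bd d n r2 \<Longrightarrow> valid Bd d (m + n) (rmul r1 r2)"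
  by (fastforce simp: valid_def rmul_def)

lemma symel_append: "symel sc Bd d (r1 @ r2) \<phi> = symel sc Bd d r1 \<phi> + symel sc Bd d r2 \<phi>"
  by (simp add: symel_def)

lemma symel_single: "symel sc Bd d [(c, ws)] \<phi> = (if \<phi> \<in> Dual sc Bd d then c * prod_list (map \<phi> ws) else 0)"
  by (simp add: symel_def)

lemma symel_rscale: "symel sc Bd d (rscale a r) \<phi> = a * symel sc Bd d r \<phi>"
proof (induction r)
  case Nil
  then show ?case by (simp add: rscale_def symel_Nil)
next
  case (Cons x r)
  obtain c ws where x: "x = (c, ws)" by fastforce
  then show ?case using Cons by (simp add: rscale_def symel_Cons algebra_simps)
qed

lemma symel_rmul: "symel sc Bd d (rmul r1 r2) \<phi> = symel sc Bd d r1 \<phi> * symel sc Bd d r2 \<phi>"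
proof (induction r1)
  case Nil
  then show ?case by (simp add: rmul_def symel_Nil)
next
  case (Cons x r1)
  obtain c ws where x: "x = (c, ws)" by fastforce
  have inner: "symel sc Bd d (map (\<lambda>(c', vs). (c * c', ws @ vs)) r2) \<phi>
      = (if \<phi> \<in> Dual sc Bd d then c * prod_list (map \<phi> ws) else 0) * symel sc Bd d r2 \<phi>" for r2
  proof (induction r2)
    case Nil
    then show ?case by (simp add: symel_Nil)
  next
    case (Cons y r2)
    obtain c' vs where y: "y = (c', vs)" by fastforce
    then show ?case using Cons by (simp add: symel_Cons algebra_simps)
  qed
  have "rmul (x # r1) r2 = map (\<lambda>(c', vs). (c * c', ws @ vs)) r2 @ rmul r1 r2"
    by (simp add: rmul_def x)
  then show ?case using Cons inner by (simp add: symel_append symel_Cons x algebra_simps)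
qed

lemma Dcomp_append: "Dcomp sc Bd d n i (r1 @ r2) z = Dcomp sc Bd d n i r1 z + Dcomp sc Bd d n i r2 z"
  by (cases z) (simp add: Dcomp_def)

lemma Dcomp_rscale: "Dcomp sc Bd d n i (rscale a r) z = a * Dcomp sc Bd d n i r z"
proof (induction r)
  case Nil
  then show ?case by (simp add: rscale_def Dcomp_Nil)
next
  case (Cons x r)
  obtain c ws where x: "x = (c, ws)" by fastforce
  obtain \<phi> \<psi> where z: "z = (\<phi>, \<psi>)" by fastforce
  show ?case using Cons by (simp add: rscale_def Dcomp_Cons x z algebra_simps)
qed

lemma Dcomp_rmul:
  assumes "valid Bd d m ry" "valid Bd d n rx" "\<phi> \<in> Dual sc Bd d" "\<psi> \<in> Dual sc Bd d"
  shows "Dcomp sc Bd d (m + n) i (rmul ry rx) (\<phi>, \<psi>)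
     = (\<Sum>j\<le>i. Dcomp sc Bd d m j ry (\<phi>, \<psi>) * Dcomp sc Bd d n (i - j) rx (\<phi>, \<psi>))"
proof -
  have "poly (Dpoly sc Bd d (m + n) (rmul ry rx) \<phi> \<psi>) = poly (Dpoly sc Bd d m ry \<phi> \<psi> * Dpoly sc Bd d n rx \<phi> \<psi>)"
  proof
    fix t
    show "poly (Dpoly sc Bd d (m + n) (rmul ry rx) \<phi> \<psi>) t = poly (Dpoly sc Bd d m ry \<phi> \<psi> * Dpoly sc Bd d n rx \<phi> \<psi>) t"
      using assms by (simp add: poly_Dpoly valid_rmul symel_rmul)
  qed
  then have "Dpoly sc Bd d (m + n) (rmul ry rx) \<phi> \<psi> = Dpoly sc Bd d m ry \<phi> \<psi> * Dpoly sc Bd d n rx \<phi> \<psi>"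
    by (simp add: poly_eq_poly_eq_iff)
  then have "coeff (Dpoly sc Bd d (m + n) (rmul ry rx) \<phi> \<psi>) i = coeff (Dpoly sc Bd d m ry \<phi> \<psi> * Dpoly sc Bd d n rx \<phi> \<psi>) i"
    by simp
  then show ?thesis by (simp only: coeff_mult coeff_Dpoly)
qed

lemma SymP_I: "valid Bd d n r \<Longrightarrow> symel sc Bd d r \<in> SymP sc Bd d n"
  by (auto simp: SymP_def)

lemma SymP_E: "x \<in> SymP sc Bd d n \<Longrightarrow> (\<And>r. valid Bd d n r \<Longrightarrow> x = symel sc Bd d r \<Longrightarrow> P) \<Longrightarrow> P"
  by (auto simp: SymP_def)

lemma SymP_mult:
  assumes "a \<in> SymP sc Bd d m" "b \<in> SymP sc Bd d n"
  shows "(\<lambda>\<phi>. a \<phi> * b \<phi>) \<in> SymP sc Bd d (m + n)"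
proof -
  obtain r1 r2 where "valid Bd d m r1" "a = symel sc Bd d r1" "valid Bd d n r2" "b = symel sc Bd d r2"
    using assms by (metis SymP_E)
  then show ?thesis
    using SymP_I[OF valid_rmul, of Bd d m r1 n r2 sc] by (simp add: symel_rmul[abs_def])
qed

lemma prod_list_sorted_nth:
  assumes "finite S"
  shows "prod_list (map (\<lambda>k. \<phi> (ws ! k)) (sorted_list_of_set S)) = (\<Prod>k\<in>S. \<phi> (ws ! k))"
proof -
  have "(\<Prod>k\<in>S. \<phi> (ws ! k)) = (\<Prod>k\<in>set (sorted_list_of_set S). \<phi> (ws ! k))"
    using assms by simp
  also have "\<dots> = prod_list (map (\<lambda>k. \<phi> (ws ! k)) (sorted_list_of_set S))"
    by (rule prod.distinct_set_conv_list) simp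
  finally show ?thesis by (simp add: comp_def)
qed

lemma prod_list_sorted_nth':
  assumes "finite S"
  shows "prod_list (map (\<phi> \<circ> (!) ws) (sorted_list_of_set S)) = (\<Prod>k\<in>S. \<phi> (ws ! k))"
  unfolding comp_def by (rule prod_list_sorted_nth[OF assms])

lemma Dcomp_tens:
  assumes "valid Bd d m ry"
  shows "Dcomp sc Bd d m j ry \<in> spanF (tens2 (SymP sc Bd d j) (SymP sc Bd d (m - j)))"
  using assms
proof (induction ry)
  case Nil
  then show ?case by (simp add: Dcomp_Nil spanF_zero)
next
  case (Cons x r)
  obtain c ws where x: "x = (c, ws)" by fastforce
  with Cons.prems have len: "length ws = m" and ws: "set ws \<subseteq> Bd d" and vr: "valid Bd d m r"
    by (auto simp: valid_Cons)
  define L1 where "L1 = (\<lambda>S. map (\<lambda>k. ws ! k) (sorted_list_of_set S))"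
  define L2 where "L2 = (\<lambda>S. map (\<lambda>k. ws ! k) (sorted_list_of_set ({..<m} - S)))"
  define G where "G = (\<lambda>S. (\<lambda>(\<phi>, \<psi>). symel sc Bd d [(c, L1 S)] \<phi> * symel sc Bd d [(1, L2 S)] \<psi>))"
  define SS where "SS = {S. S \<subseteq> {..<m} \<and> card S = j}"
  have G: "G S \<in> tens2 (SymP sc Bd d j) (SymP sc Bd d (m - j))" if "S \<in> SS" for S
  proof -
    from that have S: "S \<subseteq> {..<m}" "card S = j" by (auto simp: SS_def)
    have fin: "finite S" using S(1) finite_subset by blast
    have v1: "valid Bd d j [(c, L1 S)]"
      using S fin len ws by (auto simp: valid_def L1_def subset_iff)
    have v2: "valid Bd d (m - j) [(1, L2 S)]"
      using S fin len ws by (auto simp: valid_def L2_def subset_iff card_Diff_subset)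
    show ?thesis unfolding tens2_def G_def using SymP_I[OF v1] SymP_I[OF v2] by blast
  qed
  have T: "Dcomp sc Bd d m j (x # r) = (\<lambda>z. (\<Sum>S\<in>SS. G S z) + Dcomp sc Bd d m j r z)"
  proof (rule ext, clarify)
    fix \<phi> \<psi>
    have eachS: "G S (\<phi>, \<psi>) = (if \<phi> \<in> Dual sc Bd d \<and> \<psi> \<in> Dual sc Bd d then c * ((\<Prod>k\<in>S. \<phi> (ws ! k)) * (\<Prod>k\<in>{..<m} - S. \<psi> (ws ! k))) else 0)"
      if S: "S \<in> SS" for S
    proof -
      have f1: "finite S" and f2: "finite ({..<m} - S)" using S by (auto simp: SS_def intro: finite_subset)
      show ?thesis
        by (simp add: G_def L1_def L2_def symel_single prod_list_sorted_nth[OF f1] prod_list_sorted_nth[OF f2] comp_def)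
    qed
    show "Dcomp sc Bd d m j (x # r) (\<phi>, \<psi>) = (\<Sum>S\<in>SS. G S (\<phi>, \<psi>)) + Dcomp sc Bd d m j r (\<phi>, \<psi>)"
      unfolding x Dcomp_Cons SS_def[symmetric]
      by (cases "\<phi> \<in> Dual sc Bd d \<and> \<psi> \<in> Dual sc Bd d") (auto simp: eachS sum_distrib_left)
  qed
  show ?case
    unfolding T
    by (rule spanF_add[OF spanF_sum Cons.IH[OF vr]]) (use G spanF_gen in blast)
qed

section \<open>The join is an ideal\<close>

abbreviation Xt where
  "Xt sc Bd I J d n i \<equiv> tens2 (I d i) (SymP sc Bd d (n - i)) \<union> tens2 (SymP sc Bd d i) (J d (n - i))"

lemma joinD:
  "x \<in> join sc Bd I J d n \<Longrightarrow> valid Bd d n r \<Longrightarrow> symel sc Bd d r = x \<Longrightarrow> i \<le> n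
    \<Longrightarrow> Dcomp sc Bd d n i r \<in> spanF (Xt sc Bd I J d n i)"
  by (auto simp: join_def)

lemma join_SymP: "x \<in> join sc Bd I J d n \<Longrightarrow> x \<in> SymP sc Bd d n"
  by (auto simp: join_def)

lemma joinI:
  assumes "valid Bd d n r0" "symel sc Bd d r0 = x"
    and "\<And>i. i \<le> n \<Longrightarrow> Dcomp sc Bd d n i r0 \<in> spanF (Xt sc Bd I J d n i)"
  shows "x \<in> join sc Bd I J d n"
  unfolding join_def
proof (intro CollectI conjI allI impI)
  show "x \<in> SymP sc Bd d n" using SymP_I[OF assms(1), of sc] assms(2) by simp
next
  fix r i
  assume "valid Bd d n r" "symel sc Bd d r = x" "i \<le> n"
  then show "Dcomp sc Bd d n i r \<in> spanF (Xt sc Bd I J d n i)"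
    using Dcomp_welldef[of Bd d n r r0 sc i] assms by simp
qed

lemma tens2_I: "A \<in> S1 \<Longrightarrow> B \<in> S2 \<Longrightarrow> (\<lambda>(\<phi>, \<psi>). A \<phi> * B \<psi>) \<in> tens2 S1 S2"
  by (auto simp: tens2_def)

lemma join_zero: "(\<lambda>_. 0) \<in> join sc Bd I J d n"
  by (rule joinI[of Bd d n "[]"]) (simp_all add: valid_Nil symel_Nil Dcomp_Nil spanF_zero)

lemma join_add:
  assumes "x \<in> join sc Bd I J d n" "y \<in> join sc Bd I J d n"
  shows "(\<lambda>\<phi>. x \<phi> + y \<phi>) \<in> join sc Bd I J d n"
proof -
  obtain rx ry where rx: "valid Bd d n rx" "x = symel sc Bd d rx" and ry: "valid Bd d n ry" "y = symel sc Bd d ry"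
    using assms join_SymP by (metis SymP_E)
  show ?thesis
  proof (rule joinI[of Bd d n "rx @ ry"])
    show "valid Bd d n (rx @ ry)" using rx ry by (simp add: valid_append)
    show "symel sc Bd d (rx @ ry) = (\<lambda>\<phi>. x \<phi> + y \<phi>)" using rx ry by (simp add: symel_append fun_eq_iff)
    fix i assume i: "i \<le> n"
    have "Dcomp sc Bd d n i (rx @ ry) = (\<lambda>z. Dcomp sc Bd d n i rx z + Dcomp sc Bd d n i ry z)"
      by (simp add: Dcomp_append fun_eq_iff)
    then show "Dcomp sc Bd d n i (rx @ ry) \<in> spanF (Xt sc Bd I J d n i)"
      using spanF_add[OF joinD[OF assms(1) rx(1) rx(2)[symmetric] i] joinD[OF assms(2) ry(1) ry(2)[symmetric] i]]
      by simp
  qed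
qed

lemma join_scale:
  assumes "x \<in> join sc Bd I J d n"
  shows "(\<lambda>\<phi>. c * x \<phi>) \<in> join sc Bd I J d n"
proof -
  obtain rx where rx: "valid Bd d n rx" "x = symel sc Bd d rx"
    using assms join_SymP by (metis SymP_E)
  show ?thesis
  proof (rule joinI[of Bd d n "rscale c rx"])
    show "valid Bd d n (rscale c rx)" using rx by (simp add: valid_rscale)
    show "symel sc Bd d (rscale c rx) = (\<lambda>\<phi>. c * x \<phi>)" using rx by (simp add: symel_rscale fun_eq_iff)
    fix i assume i: "i \<le> n"
    have "Dcomp sc Bd d n i (rscale c rx) = (\<lambda>z. c * Dcomp sc Bd d n i rx z)"
      by (simp add: Dcomp_rscale fun_eq_iff)
    then show "Dcomp sc Bd d n i (rscale c rx) \<in> spanF (Xt sc Bd I J d n i)"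
      using spanF_scale[OF joinD[OF assms(1) rx(1) rx(2)[symmetric] i]] by simp
  qed
qed

lemma is_idealD:
  assumes "is_ideal sc Bd I" "x \<in> I d n" "y \<in> SymP sc Bd d m"
  shows "(\<lambda>\<phi>. y \<phi> * x \<phi>) \<in> I d (m + n)"
  using assms unfolding is_ideal_def by blast

lemma is_ideal_sub:
  assumes "is_ideal sc Bd I" "x \<in> I d n"
  shows "x \<in> SymP sc Bd d n"
  using assms unfolding is_ideal_def by blast

lemma join_mult:
  assumes I: "is_ideal sc Bd I" and J: "is_ideal sc Bd J"
    and y: "y \<in> SymP sc Bd d m" and x: "x \<in> join sc Bd I J d n"
  shows "(\<lambda>\<phi>. y \<phi> * x \<phi>) \<in> join sc Bd I J d (m + n)"
proof -
  obtain rx where rx: "valid Bd d n rx" "x = symel sc Bd d rx"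
    using x join_SymP by (metis SymP_E)
  obtain ry where ry: "valid Bd d m ry" "y = symel sc Bd d ry"
    using y by (metis SymP_E)
  show ?thesis
  proof (rule joinI[of Bd d "m + n" "rmul ry rx"])
    show "valid Bd d (m + n) (rmul ry rx)" using rx ry by (simp add: valid_rmul)
    show "symel sc Bd d (rmul ry rx) = (\<lambda>\<phi>. y \<phi> * x \<phi>)" using rx ry by (simp add: symel_rmul fun_eq_iff)
    fix i assume i: "i \<le> m + n"
    have eq: "Dcomp sc Bd d (m + n) i (rmul ry rx) = (\<lambda>z. \<Sum>j\<le>i. Dcomp sc Bd d m j ry z * Dcomp sc Bd d n (i - j) rx z)"
    proof (rule ext, clarify)
      fix \<phi> \<psi>
      show "Dcomp sc Bd d (m + n) i (rmul ry rx) (\<phi>, \<psi>) = (\<Sum>j\<le>i. Dcomp sc Bd d m j ry (\<phi>, \<psi>) * Dcomp sc Bd d n (i - j) rx (\<phi>, \<psi>))"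
      proof (cases "\<phi> \<in> Dual sc Bd d \<and> \<psi> \<in> Dual sc Bd d")
        case True
        then show ?thesis using Dcomp_rmul[OF ry(1) rx(1)] by blast
      next
        case False
        then show ?thesis unfolding Dcomp_def by auto
      qed
    qed
    have "(\<lambda>z. Dcomp sc Bd d m j ry z * Dcomp sc Bd d n (i - j) rx z) \<in> spanF (Xt sc Bd I J d (m + n) i)"
      if j: "j \<in> {..i}" for j
    proof (cases "j \<le> m \<and> i - j \<le> n")
      case False
      then have "Dcomp sc Bd d m j ry = (\<lambda>_. 0) \<or> Dcomp sc Bd d n (i - j) rx = (\<lambda>_. 0)"
        using Dcomp_big by (metis not_le)
      then show ?thesis using spanF_zero by auto
    next
      case True
      note jm = conjunct1[OF True] and ijn = conjunct2[OF True]
      have ji: "j \<le> i" using j by simp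
      show ?thesis
      proof (rule spanF_mult[OF Dcomp_tens[OF ry(1)] joinD[OF x rx(1) rx(2)[symmetric] ijn]])
        fix a b
        assume a: "a \<in> tens2 (SymP sc Bd d j) (SymP sc Bd d (m - j))"
          and b: "b \<in> Xt sc Bd I J d n (i - j)"
        from a obtain a1 a2 where a12: "a = (\<lambda>(\<phi>, \<psi>). a1 \<phi> * a2 \<psi>)" "a1 \<in> SymP sc Bd d j" "a2 \<in> SymP sc Bd d (m - j)"
          by (auto simp: tens2_def)
        from b obtain b1 b2 where b12: "b = (\<lambda>(\<phi>, \<psi>). b1 \<phi> * b2 \<psi>)"
          and cases: "(b1 \<in> I d (i - j) \<and> b2 \<in> SymP sc Bd d (n - (i - j))) \<or> (b1 \<in> SymP sc Bd d (i - j) \<and> b2 \<in> J d (n - (i - j)))"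
          by (auto simp: tens2_def)
        have prod: "(\<lambda>z. a z * b z) = (\<lambda>(\<phi>, \<psi>). (\<lambda>\<phi>. a1 \<phi> * b1 \<phi>) \<phi> * (\<lambda>\<psi>. a2 \<psi> * b2 \<psi>) \<psi>)"
          by (auto simp: a12 b12 fun_eq_iff algebra_simps)
        have e1: "j + (i - j) = i" using ji by simp
        have e2: "m - j + (n - (i - j)) = m + n - i" using ji jm ijn by simp
        from cases show "(\<lambda>z. a z * b z) \<in> spanF (Xt sc Bd I J d (m + n) i)"
        proof
          assume c: "b1 \<in> I d (i - j) \<and> b2 \<in> SymP sc Bd d (n - (i - j))"
          have "(\<lambda>\<phi>. a1 \<phi> * b1 \<phi>) \<in> I d i"
            using is_idealD[OF I conjunct1[OF c] a12(2)] e1 by simp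
          moreover have "(\<lambda>\<psi>. a2 \<psi> * b2 \<psi>) \<in> SymP sc Bd d (m + n - i)"
            using SymP_mult[OF a12(3) conjunct2[OF c]] e2 by simp
          ultimately show ?thesis unfolding prod by (intro spanF_gen UnI1 tens2_I)
        next
          assume c: "b1 \<in> SymP sc Bd d (i - j) \<and> b2 \<in> J d (n - (i - j))"
          have "(\<lambda>\<phi>. a1 \<phi> * b1 \<phi>) \<in> SymP sc Bd d i"
            using SymP_mult[OF a12(2) conjunct1[OF c]] e1 by simp
          moreover have "(\<lambda>\<psi>. a2 \<psi> * b2 \<psi>) \<in> J d (m + n - i)"
            using is_idealD[OF J conjunct2[OF c] a12(3)] e2 by simp
          ultimately show ?thesis unfolding prod by (intro spanF_gen UnI2 tens2_I)
        qed
      qed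
    qed
    then show "Dcomp sc Bd d (m + n) i (rmul ry rx) \<in> spanF (Xt sc Bd I J d (m + n) i)"
      unfolding eq by (rule spanF_sum)
  qed
qed

lemma join_is_ideal:
  assumes "is_ideal sc Bd I" "is_ideal sc Bd J"
  shows "is_ideal sc Bd (join sc Bd I J)"
  unfolding is_ideal_def
proof (intro allI conjI ballI subsetI)
  fix d n
  show "x \<in> SymP sc Bd d n" if "x \<in> join sc Bd I J d n" for x using join_SymP that by blast
  show "(\<lambda>_. 0) \<in> join sc Bd I J d n" by (rule join_zero)
  show "(\<lambda>\<phi>. x \<phi> + y \<phi>) \<in> join sc Bd I J d n" if "x \<in> join sc Bd I J d n" "y \<in> join sc Bd I J d n" for x y
    using join_add that by blast
  show "(\<lambda>\<phi>. c * x \<phi>) \<in> join sc Bd I J d n" if "x \<in> join sc Bd I J d n" for c x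
    using join_scale that by blast
  show "(\<lambda>\<phi>. y \<phi> * x \<phi>) \<in> join sc Bd I J d (m + n)" if "x \<in> join sc Bd I J d n" "y \<in> SymP sc Bd d m" for m x y
    using join_mult[OF assms that(2,1)] .
qed

section \<open>Symmetric tensors are sums of pure powers\<close>

lemma perm_expand:
  fixes a :: "nat \<Rightarrow> nat \<Rightarrow> 'k::comm_ring_1"
  shows "(\<Sum>\<tau>\<in>{\<tau>. \<tau> permutes {..<n}}. \<Prod>i<n. a i (\<tau> i))
       = (\<Sum>T\<in>Pow {..<n}. (-1) ^ (n - card T) * (\<Prod>i<n. \<Sum>j\<in>T. a i j))"
proof -
  define N where "N = {..<n}"
  have finN: "finite N" by (simp add: N_def)
  define F where "F = (\<lambda>h. \<Prod>i\<in>N. a i (h i))"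
  define g where "g = (\<lambda>S. \<Sum>h\<in>PiE N (\<lambda>_. S). F h)"
  define f where "f = (\<lambda>S. \<Sum>h\<in>{h\<in>PiE N (\<lambda>_. S). h ` N = S}. F h)"
  have gf: "g S = sum f (Pow S)" if fS: "finite S" for S
  proof -
    have "sum f (Pow S) = (\<Sum>U\<in>Pow S. \<Sum>h\<in>{h\<in>PiE N (\<lambda>_. S). h ` N = U}. F h)"
    proof (rule sum.cong[OF refl])
      fix U assume "U \<in> Pow S"
      then have "{h\<in>PiE N (\<lambda>_. U). h ` N = U} = {h\<in>PiE N (\<lambda>_. S). h ` N = U}"
        by (auto simp: PiE_def Pi_def)
      then show "f U = (\<Sum>h\<in>{h\<in>PiE N (\<lambda>_. S). h ` N = U}. F h)" by (simp add: f_def)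
    qed
    also have "\<dots> = (\<Sum>h\<in>PiE N (\<lambda>_. S). F h)"
    proof (rule sum.group)
      show "finite (PiE N (\<lambda>_. S))" using finN fS by (intro finite_PiE) auto
    qed (use fS in \<open>auto simp: PiE_def Pi_def\<close>)
    finally show ?thesis by (simp add: g_def)
  qed
  have g_prod: "g S = (\<Prod>i\<in>N. \<Sum>j\<in>S. a i j)" if "finite S" for S
    unfolding g_def F_def using prod_sum_PiE[OF finN that, of a] that by simp
  have cardN: "card N = n" by (simp add: N_def)
  have mob: "f N = (\<Sum>T\<in>Pow N. (-1) ^ (card N - card T) * g T)"
    by (rule inclusion_exclusion_mobius[OF gf finN])
  have bij: "bij_betw (\<lambda>\<tau>. restrict \<tau> N) {\<tau>. \<tau> permutes N} {h\<in>PiE N (\<lambda>_. N). h ` N = N}"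
  proof (rule bij_betwI')
    fix x y assume "x \<in> {\<tau>. \<tau> permutes N}" "y \<in> {\<tau>. \<tau> permutes N}"
    then have px: "x permutes N" and py: "y permutes N" by auto
    show "(restrict x N = restrict y N) = (x = y)"
    proof
      assume eq: "restrict x N = restrict y N"
      show "x = y"
      proof
        fix z show "x z = y z"
        proof (cases "z \<in> N")
          case True
          then show ?thesis using fun_cong[OF eq, of z] by simp
        next
          case False
          then show ?thesis using permutes_not_in[OF px] permutes_not_in[OF py] by simp
        qed
      qed
    qed simp
  next
    fix x assume "x \<in> {\<tau>. \<tau> permutes N}"
    then have px: "x permutes N" by auto
    show "restrict x N \<in> {h\<in>PiE N (\<lambda>_. N). h ` N = N}"
      using permutes_in_image[OF px] permutes_image[OF px] by auto
  next
    fix h assume h: "h \<in> {h\<in>PiE N (\<lambda>_. N). h ` N = N}"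
    define \<tau> where "\<tau> = (\<lambda>x. if x \<in> N then h x else x)"
    have "inj_on h N" using h finN by (metis (mono_tags, lifting) eq_card_imp_inj_on mem_Collect_eq)
    then have "bij_betw h N N" using h by (simp add: bij_betw_def)
    then have "bij_betw \<tau> N N" by (rule bij_betw_cong[THEN iffD1, rotated]) (simp add: \<tau>_def)
    then have p: "\<tau> permutes N" by (rule bij_imp_permutes) (simp add: \<tau>_def)
    have "restrict \<tau> N = h" using h by (auto simp: \<tau>_def fun_eq_iff PiE_def extensional_def)
    then show "\<exists>x\<in>{\<tau>. \<tau> permutes N}. h = restrict x N" using p by blast
  qed
  have "(\<Sum>\<tau>\<in>{\<tau>. \<tau> permutes N}. F (restrict \<tau> N)) = (\<Sum>h\<in>{h\<in>PiE N (\<lambda>_. N). h ` N = N}. F h)"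
    by (rule sum.reindex_bij_betw[OF bij])
  moreover have "F (restrict \<tau> N) = (\<Prod>i<n. a i (\<tau> i))" for \<tau>
    by (simp add: F_def N_def)
  ultimately have "(\<Sum>\<tau>\<in>{\<tau>. \<tau> permutes N}. \<Prod>i<n. a i (\<tau> i)) = f N"
    by (simp add: f_def)
  also have "\<dots> = (\<Sum>T\<in>Pow N. (-1) ^ (n - card T) * (\<Prod>i<n. \<Sum>j\<in>T. a i j))"
    unfolding mob cardN
  proof (rule sum.cong[OF refl])
    fix T assume "T \<in> Pow N"
    then have "finite T" using finN finite_subset by auto
    then show "(-1) ^ (n - card T) * g T = (-1) ^ (n - card T) * (\<Prod>i<n. \<Sum>j\<in>T. a i j)"
      by (simp add: g_prod N_def)
  qed
  finally show ?thesis by (simp add: N_def)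
qed

lemma SGA_sc_mult: "std_graded_algebra sc Bd \<Longrightarrow> sc c (a * b) = sc c a * b"
  by (simp add: std_graded_algebra_def)

lemma SGA_closed: "std_graded_algebra sc Bd \<Longrightarrow> a \<in> Bd d \<Longrightarrow> b \<in> Bd e \<Longrightarrow> a * b \<in> Bd (d + e)"
  by (simp add: std_graded_algebra_def)

lemma SGA_module: "std_graded_algebra sc Bd \<Longrightarrow> module sc"
  unfolding std_graded_algebra_def vector_space_def module_def by auto

lemma SGA_subspace: "std_graded_algebra sc Bd \<Longrightarrow> module.subspace sc (Bd d)"
  by (simp add: std_graded_algebra_def)

lemma SGA_zero: "std_graded_algebra sc Bd \<Longrightarrow> 0 \<in> Bd d"
  using module.subspace_0[OF SGA_module SGA_subspace] by blast

lemma SGA_add: "std_graded_algebra sc Bd \<Longrightarrow> x \<in> Bd d \<Longrightarrow> y \<in> Bd d \<Longrightarrow> x + y \<in> Bd d"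
  using module.subspace_add[OF SGA_module SGA_subspace] by blast

lemma Dual_add: "\<phi> \<in> Dual sc Bd d \<Longrightarrow> x \<in> Bd d \<Longrightarrow> y \<in> Bd d \<Longrightarrow> \<phi> (x + y) = \<phi> x + \<phi> y"
  by (simp add: Dual_def)

lemma Dual_scale: "\<phi> \<in> Dual sc Bd d \<Longrightarrow> x \<in> Bd d \<Longrightarrow> \<phi> (sc c x) = c * \<phi> x"
  by (simp add: Dual_def)

lemma Dual_zero:
  assumes "std_graded_algebra sc Bd" "\<phi> \<in> Dual sc Bd d"
  shows "\<phi> 0 = 0"
proof -
  have "\<phi> (0 + 0) = \<phi> 0 + \<phi> 0" using Dual_add[OF assms(2) SGA_zero[OF assms(1)] SGA_zero[OF assms(1)]] .
  then show ?thesis by simp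
qed

lemma Dual_sum:
  assumes SGA: "std_graded_algebra sc Bd" and phi: "\<phi> \<in> Dual sc Bd d"
    and f: "\<And>j. j \<in> T \<Longrightarrow> f j \<in> Bd d"
  shows "(\<Sum>j\<in>T. f j) \<in> Bd d \<and> \<phi> (\<Sum>j\<in>T. f j) = (\<Sum>j\<in>T. \<phi> (f j))"
proof (cases "finite T")
  case True
  then show ?thesis using f
  proof (induction T rule: finite_induct)
    case empty
    then show ?case using SGA_zero[OF SGA] Dual_zero[OF SGA phi] by simp
  next
    case (insert x F)
    then show ?case using SGA_add[OF SGA] Dual_add[OF phi] by simp
  qed
next
  case False
  then show ?thesis using SGA_zero[OF SGA] Dual_zero[OF SGA phi] by simp
qed

lemma Dual_mult_left:
  assumes SGA: "std_graded_algebra sc Bd" and phi: "\<phi> \<in> Dual sc Bd (e + d)" and u: "u \<in> Bd e"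
  shows "(\<lambda>x. \<phi> (u * x)) \<in> Dual sc Bd d"
  unfolding Dual_def
proof (intro CollectI conjI ballI allI)
  fix x y assume x: "x \<in> Bd d" and y: "y \<in> Bd d"
  show "\<phi> (u * (x + y)) = \<phi> (u * x) + \<phi> (u * y)"
    using Dual_add[OF phi SGA_closed[OF SGA u x] SGA_closed[OF SGA u y]] by (simp add: distrib_left)
next
  fix c x assume x: "x \<in> Bd d"
  have "u * sc c x = sc c (u * x)"
    using SGA_sc_mult[OF SGA, of c x u] by (simp add: mult.commute)
  then show "\<phi> (u * sc c x) = c * \<phi> (u * x)"
    using Dual_scale[OF phi SGA_closed[OF SGA u x]] by simp
qed

lemma Dual_mult_right:
  assumes SGA: "std_graded_algebra sc Bd" and phi: "\<phi> \<in> Dual sc Bd (e + d)" and v: "v \<in> Bd d"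
  shows "(\<lambda>x. \<phi> (x * v)) \<in> Dual sc Bd e"
proof -
  have "\<phi> \<in> Dual sc Bd (d + e)" using phi by (simp add: add.commute)
  from Dual_mult_left[OF SGA this v] show ?thesis by (simp add: mult.commute)
qed

lemma sum_list_sum_swap:
  "(\<Sum>x\<leftarrow>xs. \<Sum>t\<in>A. h x t) = (\<Sum>t\<in>A. \<Sum>x\<leftarrow>xs. h x t)"
  by (induction xs) (simp_all add: sum.distrib)

lemma sum_list_concat_map: "(\<Sum>x\<leftarrow>concat (map g xs). f x) = (\<Sum>y\<leftarrow>xs. \<Sum>x\<leftarrow>g y. f x)"
  by (induction xs) auto

lemma tensel_eval:
  "length \<phi>s = n \<Longrightarrow> set \<phi>s \<subseteq> Dual sc Bd d \<Longrightarrow>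
    tensel sc Bd d n r \<phi>s = (\<Sum>(c, ws)\<leftarrow>r. c * (\<Prod>i<n. (\<phi>s ! i) (ws ! i)))"
  by (simp add: tensel_def)

lemma Simg_eval:
  "length \<phi>s = n \<Longrightarrow> set \<phi>s \<subseteq> Dual sc Bd d \<Longrightarrow>
    Simg sc Bd d n r \<phi>s = (\<Sum>(c, ws)\<leftarrow>r. c * (\<Sum>\<tau>\<in>{\<tau>. \<tau> permutes {..<n}}. \<Prod>i<n. (\<phi>s ! i) (ws ! \<tau> i)))"
  by (simp add: Simg_def)

lemma prod_perm_reindex:
  assumes "\<tau> permutes {..<n}"
  shows "(\<Prod>i<n. G (inv \<tau> (\<tau> i)) (\<tau> i)) = (\<Prod>j<n. G (inv \<tau> j) j)"
  using prod.reindex_bij_betw[OF permutes_imp_bij[OF assms], of "\<lambda>j. G (inv \<tau> j) j"] by simp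

lemma sym_sum:
  assumes vg: "valid Bd e n rg" and phis: "length \<phi>s = n" "set \<phi>s \<subseteq> Dual sc Bd e"
    and sym: "\<forall>\<sigma>. \<sigma> permutes {..<n} \<longrightarrow> (\<forall>\<phi>s. length \<phi>s = n \<longrightarrow>
       tensel sc Bd e n rg (map (\<lambda>i. \<phi>s ! \<sigma> i) [0..<n]) = tensel sc Bd e n rg \<phi>s)"
  shows "(\<Sum>(c, us)\<leftarrow>rg. c * (\<Sum>\<tau>\<in>{\<tau>. \<tau> permutes {..<n}}. \<Prod>i<n. (\<phi>s ! i) (us ! \<tau> i)))
       = fact n * tensel sc Bd e n rg \<phi>s"
proof -
  have "(\<Sum>(c, us)\<leftarrow>rg. c * (\<Sum>\<tau>\<in>{\<tau>. \<tau> permutes {..<n}}. \<Prod>i<n. (\<phi>s ! i) (us ! \<tau> i)))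
      = (\<Sum>(c, us)\<leftarrow>rg. \<Sum>\<tau>\<in>{\<tau>. \<tau> permutes {..<n}}. c * (\<Prod>i<n. (\<phi>s ! i) (us ! \<tau> i)))"
    by (simp add: sum_distrib_left)
  also have "\<dots> = (\<Sum>\<tau>\<in>{\<tau>. \<tau> permutes {..<n}}. \<Sum>(c, us)\<leftarrow>rg. c * (\<Prod>i<n. (\<phi>s ! i) (us ! \<tau> i)))"
    by (simp only: split_def sum_list_sum_swap)
  also have "\<dots> = (\<Sum>\<tau>\<in>{\<tau>. \<tau> permutes {..<n}}. tensel sc Bd e n rg \<phi>s)"
  proof (rule sum.cong[OF refl])
    fix \<tau> assume "\<tau> \<in> {\<tau>. \<tau> permutes {..<n}}"
    then have p: "\<tau> permutes {..<n}" by simp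
    have pi: "inv \<tau> permutes {..<n}" using permutes_inv[OF p] .
    define \<chi>s where "\<chi>s = map (\<lambda>j. \<phi>s ! inv \<tau> j) [0..<n]"
    have len: "length \<chi>s = n" by (simp add: \<chi>s_def)
    have set: "set \<chi>s \<subseteq> Dual sc Bd e"
      using phis permutes_in_image[OF pi] by (auto simp: \<chi>s_def)
    have "(\<Prod>i<n. (\<phi>s ! i) (us ! \<tau> i)) = (\<Prod>j<n. (\<chi>s ! j) (us ! j))" for us
    proof -
      have "(\<Prod>i<n. (\<phi>s ! i) (us ! \<tau> i)) = (\<Prod>i<n. (\<phi>s ! inv \<tau> (\<tau> i)) (us ! \<tau> i))"
        using permutes_inverses(2)[OF p] by simp
      also have "\<dots> = (\<Prod>j<n. (\<phi>s ! inv \<tau> j) (us ! j))"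
        by (rule prod_perm_reindex[OF p, of "\<lambda>a b. (\<phi>s ! a) (us ! b)"])
      also have "\<dots> = (\<Prod>j<n. (\<chi>s ! j) (us ! j))"
        by (simp add: \<chi>s_def)
      finally show ?thesis .
    qed
    then have "(\<Sum>(c, us)\<leftarrow>rg. c * (\<Prod>i<n. (\<phi>s ! i) (us ! \<tau> i))) = tensel sc Bd e n rg \<chi>s"
      using tensel_eval[OF len set] by (simp add: case_prod_beta)
    also have "\<dots> = tensel sc Bd e n rg \<phi>s"
      using sym pi phis(1) by (simp add: \<chi>s_def)
    finally show "(\<Sum>(c, us)\<leftarrow>rg. c * (\<Prod>i<n. (\<phi>s ! i) (us ! \<tau> i))) = tensel sc Bd e n rg \<phi>s" .
  qed
  also have "\<dots> = fact n * tensel sc Bd e n rg \<phi>s"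
    by (simp add: card_permutations)
  finally show ?thesis .
qed

lemma Bd_sum:
  assumes SGA: "std_graded_algebra sc Bd" and f: "\<And>j. j \<in> T \<Longrightarrow> f j \<in> Bd d"
  shows "(\<Sum>j\<in>T. f j) \<in> Bd d"
proof (cases "finite T")
  case True
  then show ?thesis using f
    by (induction T rule: finite_induct) (auto simp: SGA_zero[OF SGA] SGA_add[OF SGA])
next
  case False
  then show ?thesis using SGA_zero[OF SGA] by simp
qed

lemma sum_list_div:
  fixes k :: "'k::field"
  shows "(\<Sum>(c, us)\<leftarrow>xs. (c / k) * Q us) = (\<Sum>(c, us)\<leftarrow>xs. c * Q us) / k"
  by (induction xs) (auto simp: add_divide_distrib)

lemma sym_pure:
  fixes sc :: "'k::field_char_0 \<Rightarrow> 'b::comm_ring_1 \<Rightarrow> 'b"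
  assumes SGA: "std_graded_algebra sc Bd" and vg: "valid Bd e n rg"
    and sym: "\<forall>\<sigma>. \<sigma> permutes {..<n} \<longrightarrow> (\<forall>\<phi>s. length \<phi>s = n \<longrightarrow>
       tensel sc Bd e n rg (map (\<lambda>i. \<phi>s ! \<sigma> i) [0..<n]) = tensel sc Bd e n rg \<phi>s)"
  shows "\<exists>R. (\<forall>x\<in>set R. snd x \<in> Bd e) \<and> (\<forall>\<phi>s. length \<phi>s = n \<longrightarrow> set \<phi>s \<subseteq> Dual sc Bd e \<longrightarrow>
     tensel sc Bd e n rg \<phi>s = (\<Sum>(a, u)\<leftarrow>R. a * (\<Prod>i<n. (\<phi>s ! i) u)))"
proof -
  obtain Ts where Ts: "set Ts = Pow {..<n}" "distinct Ts"
    using finite_distinct_list[of "Pow {..<n}"] by auto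
  define F where "F = (\<lambda>(c::'k, us::'b list). map (\<lambda>T. (c * (-1) ^ (n - card T) / fact n, \<Sum>j\<in>T. us ! j)) Ts)"
  define R where "R = concat (map F rg)"
  show ?thesis
  proof (rule exI[of _ R], intro conjI ballI allI impI)
    fix x assume "x \<in> set R"
    then obtain c us T where cu: "(c, us) \<in> set rg" and T: "T \<in> set Ts" and x: "snd x = (\<Sum>j\<in>T. us ! j)"
      by (auto simp: R_def F_def)
    from vg cu have "length us = n" "set us \<subseteq> Bd e" by (auto simp: valid_def)
    then have "j \<in> T \<Longrightarrow> us ! j \<in> Bd e" for j using T Ts(1) by (auto simp: subset_iff)
    then show "snd x \<in> Bd e" unfolding x by (rule Bd_sum[OF SGA])
  next
    fix \<phi>s :: "('b \<Rightarrow> 'k) list"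
    assume len: "length \<phi>s = n" and set: "set \<phi>s \<subseteq> Dual sc Bd e"
    define P where "P = (\<lambda>u. \<Prod>i<n. (\<phi>s ! i) u)"
    define Q where "Q = (\<lambda>us. \<Sum>\<tau>\<in>{\<tau>. \<tau> permutes {..<n}}. \<Prod>i<n. (\<phi>s ! i) (us ! \<tau> i))"
    have per: "(\<Sum>T\<in>Pow {..<n}. (-1) ^ (n - card T) * P (\<Sum>j\<in>T. us ! j)) = Q us"
      if "length us = n" "set us \<subseteq> Bd e" for us
    proof -
      have "P (\<Sum>j\<in>T. us ! j) = (\<Prod>i<n. \<Sum>j\<in>T. (\<phi>s ! i) (us ! j))" if T: "T \<in> Pow {..<n}" for T
        unfolding P_def
      proof (rule prod.cong[OF refl])
        fix i assume "i \<in> {..<n}"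
        then have "\<phi>s ! i \<in> Dual sc Bd e" using len set by (auto simp: subset_iff)
        moreover have "j \<in> T \<Longrightarrow> us ! j \<in> Bd e" for j
          using T \<open>length us = n\<close> \<open>set us \<subseteq> Bd e\<close> by (auto simp: subset_iff)
        ultimately show "(\<phi>s ! i) (\<Sum>j\<in>T. us ! j) = (\<Sum>j\<in>T. (\<phi>s ! i) (us ! j))"
          using Dual_sum[OF SGA] by blast
      qed
      then show ?thesis
        unfolding Q_def perm_expand[where a="\<lambda>i j. (\<phi>s ! i) (us ! j)" and n=n] by simp
    qed
    have claim: "set rg' \<subseteq> set rg \<Longrightarrow> (\<Sum>(a, u)\<leftarrow>concat (map F rg'). a * P u) = (\<Sum>(c, us)\<leftarrow>rg'. (c / fact n) * Q us)" for rg'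
    proof (induction rg')
      case Nil
      then show ?case by simp
    next
      case (Cons y rg')
      obtain c us where y: "y = (c, us)" by fastforce
      with Cons.prems vg have lu: "length us = n" "set us \<subseteq> Bd e" by (auto simp: valid_def)
      have "(\<Sum>(a, u)\<leftarrow>F y. a * P u) = (\<Sum>T\<leftarrow>Ts. (c * (-1) ^ (n - card T) / fact n) * P (\<Sum>j\<in>T. us ! j))"
        by (simp add: F_def y comp_def)
      also have "\<dots> = (\<Sum>T\<in>Pow {..<n}. (c * (-1) ^ (n - card T) / fact n) * P (\<Sum>j\<in>T. us ! j))"
        by (simp add: sum_list_distinct_conv_sum_set[OF Ts(2)] Ts(1))
      also have "\<dots> = (c / fact n) * (\<Sum>T\<in>Pow {..<n}. (-1) ^ (n - card T) * P (\<Sum>j\<in>T. us ! j))"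
        by (simp add: sum_distrib_left mult_ac)
      also have "\<dots> = (c / fact n) * Q us" using per[OF lu] by simp
      finally show ?case using Cons by (simp add: y)
    qed
    have "(\<Sum>(a, u)\<leftarrow>R. a * P u) = (\<Sum>(c, us)\<leftarrow>rg. (c / fact n) * Q us)"
      unfolding R_def by (rule claim) simp
    also have "\<dots> = (\<Sum>(c, us)\<leftarrow>rg. c * Q us) / fact n" by (rule sum_list_div)
    also have "(\<Sum>(c, us)\<leftarrow>rg. c * Q us) = fact n * tensel sc Bd e n rg \<phi>s"
      unfolding Q_def by (rule sym_sum[OF vg len set sym])
    finally show "tensel sc Bd e n rg \<phi>s = (\<Sum>(a, u)\<leftarrow>R. a * (\<Prod>i<n. (\<phi>s ! i) u))"
      by (simp add: P_def)
  qed
qed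

section \<open>Substitution by multiplication\<close>

definition usub :: "'b::times \<Rightarrow> ('k \<times> 'b list) list \<Rightarrow> ('k \<times> 'b list) list" where
  "usub u r = map (\<lambda>(c, ws). (c, map (\<lambda>w. u * w) ws)) r"

lemma valid_usub:
  assumes SGA: "std_graded_algebra sc Bd" and u: "u \<in> Bd e" and v: "valid Bd d n r"
  shows "valid Bd (e + d) n (usub u r)"
  using v SGA_closed[OF SGA u] unfolding valid_def usub_def by fastforce

lemma symel_usub:
  assumes SGA: "std_graded_algebra sc Bd" and u: "u \<in> Bd e"
  shows "symel sc Bd (e + d) (usub u r) \<phi> =
    (if \<phi> \<in> Dual sc Bd (e + d) then symel sc Bd d r (\<lambda>x. \<phi> (u * x)) else 0)"
proof (cases "\<phi> \<in> Dual sc Bd (e + d)")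
  case True
  then have D: "(\<lambda>x. \<phi> (u * x)) \<in> Dual sc Bd d" by (rule Dual_mult_left[OF SGA _ u])
  show ?thesis
  proof (induction r)
    case Nil
    then show ?case by (simp add: usub_def symel_Nil)
  next
    case (Cons x r)
    obtain c ws where x: "x = (c, ws)" by fastforce
    show ?case using Cons True D by (simp add: usub_def x symel_Cons comp_def)
  qed
next
  case False
  then show ?thesis by (simp add: symel_def)
qed

lemma Dcomp_usub:
  assumes SGA: "std_graded_algebra sc Bd" and u: "u \<in> Bd e" and v: "valid Bd d n r"
  shows "Dcomp sc Bd (e + d) n i (usub u r) =
    (\<lambda>z. if fst z \<in> Dual sc Bd (e + d) \<and> snd z \<in> Dual sc Bd (e + d)
         then Dcomp sc Bd d n i r ((\<lambda>x. fst z (u * x)), (\<lambda>x. snd z (u * x))) else 0)"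
proof (rule ext, clarify)
  fix \<phi> \<psi>
  show "Dcomp sc Bd (e + d) n i (usub u r) (\<phi>, \<psi>) =
    (if fst (\<phi>, \<psi>) \<in> Dual sc Bd (e + d) \<and> snd (\<phi>, \<psi>) \<in> Dual sc Bd (e + d)
         then Dcomp sc Bd d n i r ((\<lambda>x. fst (\<phi>, \<psi>) (u * x)), (\<lambda>x. snd (\<phi>, \<psi>) (u * x))) else 0)"
  proof (cases "\<phi> \<in> Dual sc Bd (e + d) \<and> \<psi> \<in> Dual sc Bd (e + d)")
    case True
    then have D: "(\<lambda>x. \<phi> (u * x)) \<in> Dual sc Bd d" "(\<lambda>x. \<psi> (u * x)) \<in> Dual sc Bd d"
      using Dual_mult_left[OF SGA _ u] by blast+
    have "Dcomp sc Bd (e + d) n i (usub u r) (\<phi>, \<psi>) = Dcomp sc Bd d n i r ((\<lambda>x. \<phi> (u * x)), (\<lambda>x. \<psi> (u * x)))"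
      using v
    proof (induction r)
      case Nil
      then show ?case by (simp add: usub_def Dcomp_Nil)
    next
      case (Cons x r)
      obtain c ws where x: "x = (c, ws)" by fastforce
      from Cons.prems have len: "length ws = n" and vr: "valid Bd d n r" by (auto simp: x valid_Cons)
      have E: "(\<Sum>S\<in>{S. S \<subseteq> {..<n} \<and> card S = i}. (\<Prod>k\<in>S. \<phi> (map ((*) u) ws ! k)) * (\<Prod>k\<in>{..<n} - S. \<psi> (map ((*) u) ws ! k)))
          = (\<Sum>S\<in>{S. S \<subseteq> {..<n} \<and> card S = i}. (\<Prod>k\<in>S. \<phi> (u * ws ! k)) * (\<Prod>k\<in>{..<n} - S. \<psi> (u * ws ! k)))"
      proof (rule sum.cong[OF refl])
        fix S assume "S \<in> {S. S \<subseteq> {..<n} \<and> card S = i}"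
        then have "S \<subseteq> {..<n}" by simp
        then show "(\<Prod>k\<in>S. \<phi> (map ((*) u) ws ! k)) * (\<Prod>k\<in>{..<n} - S. \<psi> (map ((*) u) ws ! k))
            = (\<Prod>k\<in>S. \<phi> (u * ws ! k)) * (\<Prod>k\<in>{..<n} - S. \<psi> (u * ws ! k))"
          using len by (intro arg_cong2[where f="(*)"] prod.cong) auto
      qed
      have U: "usub u (x # r) = (c, map ((*) u) ws) # usub u r" by (simp add: usub_def x)
      show ?case
        unfolding U Dcomp_Cons using True D E Cons.IH[OF vr] by (simp add: x Dcomp_Cons)
    qed
    then show ?thesis using True by simp
  next
    case False
    then show ?thesis unfolding Dcomp_def by auto
  qed
qed

lemma exists_sym_rep:
  fixes p :: "('k::field_char_0 \<times> 'b::comm_ring_1 list) list"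
  assumes v: "valid Bd d n p"
  shows "\<exists>rf. valid Bd d n rf \<and> tensel sc Bd d n rf = Simg sc Bd d n p"
proof -
  obtain Ps where Ps: "set Ps = {\<tau>. \<tau> permutes {..<n}}" "distinct Ps"
    using finite_distinct_list[OF finite_permutations[of "{..<n}"]] by blast
  define F where "F = (\<lambda>x::'k \<times> 'b list. map (\<lambda>\<tau>. (fst x, map (\<lambda>j. snd x ! \<tau> j) [0..<n])) Ps)"
  define rf where "rf = concat (map F p)"
  have inner: "\<forall>y\<in>set (F x). (case y of (c, ws) \<Rightarrow> length ws = n \<and> set ws \<subseteq> Bd d)" if x: "x \<in> set p" for x
  proof -
    obtain c ws where xe: "x = (c, ws)" by fastforce
    have lw: "length ws = n" "set ws \<subseteq> Bd d" using v x xe by (auto simp: valid_def)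
    have "ws ! \<tau> j \<in> Bd d" if "\<tau> \<in> set Ps" "j < n" for \<tau> j
    proof -
      have "\<tau> j < n" using that Ps(1) permutes_in_image[of \<tau> "{..<n}" j] by auto
      then show ?thesis using lw nth_mem by blast
    qed
    then show ?thesis unfolding F_def xe by auto
  qed
  have "valid Bd d n rf"
    unfolding valid_def rf_def using inner by auto
  moreover have "tensel sc Bd d n rf = Simg sc Bd d n p"
  proof (rule ext)
    fix \<phi>s
    show "tensel sc Bd d n rf \<phi>s = Simg sc Bd d n p \<phi>s"
    proof (cases "length \<phi>s = n \<and> set \<phi>s \<subseteq> Dual sc Bd d")
      case True
      have "(\<Sum>(c, ws)\<leftarrow>concat (map F p'). c * (\<Prod>i<n. (\<phi>s ! i) (ws ! i)))
          = (\<Sum>(c, ws)\<leftarrow>p'. c * (\<Sum>\<tau>\<in>{\<tau>. \<tau> permutes {..<n}}. \<Prod>i<n. (\<phi>s ! i) (ws ! \<tau> i)))" for p'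
      proof (induction p')
        case Nil
        then show ?case by simp
      next
        case (Cons x p')
        obtain c ws where x: "x = (c, ws)" by fastforce
        have "(\<Sum>(c, ws)\<leftarrow>F x. c * (\<Prod>i<n. (\<phi>s ! i) (ws ! i)))
           = (\<Sum>\<tau>\<leftarrow>Ps. c * (\<Prod>i<n. (\<phi>s ! i) (ws ! \<tau> i)))"
          by (simp add: F_def x comp_def)
        also have "\<dots> = c * (\<Sum>\<tau>\<in>{\<tau>. \<tau> permutes {..<n}}. \<Prod>i<n. (\<phi>s ! i) (ws ! \<tau> i))"
          by (simp add: sum_list_distinct_conv_sum_set[OF Ps(2)] Ps(1) sum_distrib_left)
        finally show ?case using Cons by (simp add: x)
      qed
      then show ?thesis using True by (simp add: tensel_def Simg_def rf_def)
    next
      case False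
      then show ?thesis unfolding tensel_def Simg_def by auto
    qed
  qed
  ultimately show ?thesis by blast
qed

lemma set_perm_list:
  assumes "\<sigma> permutes {..<n}" "length \<phi>s = n"
  shows "set (map (\<lambda>i. \<phi>s ! \<sigma> i) [0..<n]) = set \<phi>s"
proof -
  have "set (map (\<lambda>i. \<phi>s ! \<sigma> i) [0..<n]) = (\<lambda>j. \<phi>s ! j) ` (\<sigma> ` {..<n})"
    by (auto simp: atLeast0LessThan)
  also have "\<dots> = (\<lambda>j. \<phi>s ! j) ` {..<n}" using permutes_image[OF assms(1)] by simp
  also have "\<dots> = set \<phi>s" using assms(2) by (auto simp: in_set_conv_nth)
  finally show ?thesis .
qed

lemma TensInv_pow:
  fixes sc :: "'k::field_char_0 \<Rightarrow> 'b::comm_ring_1 \<Rightarrow> 'b"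
  assumes u: "u \<in> Bd e"
  shows "tensel sc Bd e n [(1, replicate n u)] \<in> TensInv sc Bd e n"
  unfolding TensInv_def
proof (intro CollectI exI conjI allI impI)
  show "valid Bd e n [(1, replicate n u)]" using u by (auto simp: valid_def)
  show "tensel sc Bd e n [(1, replicate n u)] = tensel sc Bd e n [(1, replicate n u)]" ..
  fix \<sigma> and \<phi>s :: "('b \<Rightarrow> 'k) list"
  assume p: "\<sigma> permutes {..<n}" and len: "length \<phi>s = n"
  have "(\<Prod>i<n. (\<phi>s ! \<sigma> i) u) = (\<Prod>j<n. (\<phi>s ! j) u)"
    using prod.reindex_bij_betw[OF permutes_imp_bij[OF p], of "\<lambda>j. (\<phi>s ! j) u"] by simp
  then show "tensel sc Bd e n [(1, replicate n u)] (map (\<lambda>i. \<phi>s ! \<sigma> i) [0..<n]) = tensel sc Bd e n [(1, replicate n u)] \<phi>s"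
    using set_perm_list[OF p len] len by (simp add: tensel_def)
qed

lemma map2_nth: "i < length us \<Longrightarrow> i < length vs \<Longrightarrow> map2 f us vs ! i = f (us ! i) (vs ! i)"
  by simp

lemma tensel_tprod:
  assumes vg: "valid Bd e n rg" and vf: "valid Bd d n rf"
    and len: "length \<phi>s = n" and set: "set \<phi>s \<subseteq> Dual sc Bd (e + d)"
  shows "tensel sc Bd (e + d) n (tprod rg rf) \<phi>s =
    (\<Sum>(c, us)\<leftarrow>rg. \<Sum>(c', vs)\<leftarrow>rf. c * c' * (\<Prod>i<n. (\<phi>s ! i) (us ! i * vs ! i)))"
proof -
  have inner: "(\<Sum>(c, ws)\<leftarrow>map (\<lambda>(c', vs). (c * c', map2 (*) us vs)) rf'. c * (\<Prod>i<n. (\<phi>s ! i) (ws ! i)))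
     = (\<Sum>(c', vs)\<leftarrow>rf'. c * c' * (\<Prod>i<n. (\<phi>s ! i) (us ! i * vs ! i)))"
    if "length us = n" "valid Bd d n rf'" for c us rf'
    using that(2)
  proof (induction rf')
    case Nil
    then show ?case by simp
  next
    case (Cons x rf')
    obtain c' vs where x: "x = (c', vs)" by fastforce
    from Cons.prems have lv: "length vs = n" and vr: "valid Bd d n rf'" by (auto simp: x valid_Cons)
    have "(\<Prod>i<n. (\<phi>s ! i) (map2 (*) us vs ! i)) = (\<Prod>i<n. (\<phi>s ! i) (us ! i * vs ! i))"
      using that(1) lv by (intro prod.cong) auto
    then show ?case using Cons.IH[OF vr] by (simp add: x)
  qed
  have "(\<Sum>(c, ws)\<leftarrow>tprod rg' rf. c * (\<Prod>i<n. (\<phi>s ! i) (ws ! i))) =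
    (\<Sum>(c, us)\<leftarrow>rg'. \<Sum>(c', vs)\<leftarrow>rf. c * c' * (\<Prod>i<n. (\<phi>s ! i) (us ! i * vs ! i)))"
    if "valid Bd e n rg'" for rg'
    using that
  proof (induction rg')
    case Nil
    then show ?case by (simp add: tprod_def)
  next
    case (Cons x rg')
    obtain c us where x: "x = (c, us)" by fastforce
    from Cons.prems have lu: "length us = n" and vr: "valid Bd e n rg'" by (auto simp: x valid_Cons)
    have T: "tprod (x # rg') rf = map (\<lambda>(c', vs). (c * c', map2 (*) us vs)) rf @ tprod rg' rf"
      by (simp add: tprod_def x)
    show ?case unfolding T using inner[OF lu vf, of c] Cons.IH[OF vr] by (simp add: x)
  qed
  then show ?thesis using vg len set by (simp add: tensel_def)
qed

lemma Simg_diag: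
  assumes v: "valid Bd d n A" and phi: "\<phi> \<in> Dual sc Bd d"
  shows "Simg sc Bd d n A (replicate n \<phi>) = fact n * symel sc Bd d A \<phi>"
proof -
  have "(\<Sum>(c, ws)\<leftarrow>A'. c * (\<Sum>\<tau>\<in>{\<tau>. \<tau> permutes {..<n}}. \<Prod>i<n. (replicate n \<phi> ! i) (ws ! \<tau> i)))
      = fact n * (\<Sum>(c, ws)\<leftarrow>A'. c * prod_list (map \<phi> ws))" if "valid Bd d n A'" for A'
    using that
  proof (induction A')
    case Nil
    then show ?case by simp
  next
    case (Cons x A')
    obtain c ws where x: "x = (c, ws)" by fastforce
    from Cons.prems have lw: "length ws = n" and vr: "valid Bd d n A'" by (auto simp: x valid_Cons)
    have "(\<Prod>i<n. (replicate n \<phi> ! i) (ws ! \<tau> i)) = prod_list (map \<phi> ws)" if p: "\<tau> permutes {..<n}" for \<tau>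
    proof -
      have "(\<Prod>i<n. (replicate n \<phi> ! i) (ws ! \<tau> i)) = (\<Prod>i<n. \<phi> (ws ! \<tau> i))" by simp
      also have "\<dots> = (\<Prod>i<n. \<phi> (ws ! i))"
        using prod.reindex_bij_betw[OF permutes_imp_bij[OF p], of "\<lambda>j. \<phi> (ws ! j)"] by simp
      also have "\<dots> = prod_list (map \<phi> ws)" using lw by (simp add: prod_list_map_nth)
      finally show ?thesis .
    qed
    then have "(\<Sum>\<tau>\<in>{\<tau>. \<tau> permutes {..<n}}. \<Prod>i<n. (replicate n \<phi> ! i) (ws ! \<tau> i)) = fact n * prod_list (map \<phi> ws)"
      by (simp add: card_permutations)
    then show ?case using Cons.IH[OF vr] by (simp add: x algebra_simps)
  qed
  moreover have "set (replicate n \<phi>) \<subseteq> Dual sc Bd d" using phi by auto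
  ultimately show ?thesis using v phi by (simp add: Simg_def symel_def)
qed

lemma di_idealD:
  assumes "di_ideal sc Bd I" "valid Bd d n rf" "tensel sc Bd d n rf \<in> SI sc Bd I d n"
    "valid Bd e n rg" "tensel sc Bd e n rg \<in> TensInv sc Bd e n"
  shows "tensel sc Bd (e + d) n (tprod rg rf) \<in> SI sc Bd I (e + d) n"
proof -
  have "\<forall>d e n rf rg. valid Bd d n rf \<longrightarrow> tensel sc Bd d n rf \<in> SI sc Bd I d n \<longrightarrow>
        valid Bd e n rg \<longrightarrow> tensel sc Bd e n rg \<in> TensInv sc Bd e n \<longrightarrow>
        tensel sc Bd (e + d) n (tprod rg rf) \<in> SI sc Bd I (e + d) n"
    using assms(1) unfolding di_ideal_def by (rule conjunct2)
  then show ?thesis using assms(2-5) by blast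
qed

lemma di_usub:
  fixes sc :: "'k::field_char_0 \<Rightarrow> 'b::comm_ring_1 \<Rightarrow> 'b"
  assumes SGA: "std_graded_algebra sc Bd" and dI: "di_ideal sc Bd I"
    and vp: "valid Bd d i p" and pI: "symel sc Bd d p \<in> I d i" and u: "u \<in> Bd e"
  shows "symel sc Bd (e + d) (usub u p) \<in> I (e + d) i"
proof -
  obtain rf where vf: "valid Bd d i rf" and rf: "tensel sc Bd d i rf = Simg sc Bd d i p"
    using exists_sym_rep[OF vp] by blast
  have SIf: "tensel sc Bd d i rf \<in> SI sc Bd I d i"
    unfolding SI_def rf using vp pI by blast
  have vg: "valid Bd e i [(1, replicate i u)]" using u by (auto simp: valid_def)
  have TI: "tensel sc Bd e i [(1, replicate i u)] \<in> TensInv sc Bd e i" using TensInv_pow[of u Bd e sc i] u by blast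
  have "tensel sc Bd (e + d) i (tprod [(1, replicate i u)] rf) \<in> SI sc Bd I (e + d) i"
    by (rule di_idealD[OF dI vf SIf vg TI])
  then obtain A where vA: "valid Bd (e + d) i A" and AI: "symel sc Bd (e + d) A \<in> I (e + d) i"
    and A: "Simg sc Bd (e + d) i A = tensel sc Bd (e + d) i (tprod [(1, replicate i u)] rf)"
    unfolding SI_def by auto
  have "symel sc Bd (e + d) A = symel sc Bd (e + d) (usub u p)"
  proof (rule ext)
    fix \<phi>
    show "symel sc Bd (e + d) A \<phi> = symel sc Bd (e + d) (usub u p) \<phi>"
    proof (cases "\<phi> \<in> Dual sc Bd (e + d)")
      case True
      define \<chi> where "\<chi> = (\<lambda>x. \<phi> (u * x))"
      have chi: "\<chi> \<in> Dual sc Bd d" unfolding \<chi>_def by (rule Dual_mult_left[OF SGA True u])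
      have setr: "set (replicate i \<phi>) \<subseteq> Dual sc Bd (e + d)" using True by auto
      have setc: "set (replicate i \<chi>) \<subseteq> Dual sc Bd d" using chi by auto
      have "fact i * symel sc Bd (e + d) A \<phi> = Simg sc Bd (e + d) i A (replicate i \<phi>)"
        by (rule Simg_diag[OF vA True, symmetric])
      also have "\<dots> = (\<Sum>(c', vs)\<leftarrow>rf. 1 * c' * (\<Prod>j<i. (replicate i \<phi> ! j) (replicate i u ! j * vs ! j)))"
        unfolding A using tensel_tprod[OF vg vf _ setr] by simp
      also have "\<dots> = (\<Sum>(c', vs)\<leftarrow>rf. c' * (\<Prod>j<i. (replicate i \<chi> ! j) (vs ! j)))"
        by (simp add: \<chi>_def)
      also have "\<dots> = tensel sc Bd d i rf (replicate i \<chi>)"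
        using setc by (simp add: tensel_def)
      also have "\<dots> = fact i * symel sc Bd d p \<chi>"
        unfolding rf by (rule Simg_diag[OF vp chi])
      also have "\<dots> = fact i * symel sc Bd (e + d) (usub u p) \<phi>"
        using symel_usub[OF SGA u, of d p \<phi>] True by (simp add: \<chi>_def)
      finally show ?thesis by simp
    next
      case False
      then show ?thesis using symel_usub[OF SGA u, of d p \<phi>] by (simp add: symel_def)
    qed
  qed
  then show ?thesis using AI by simp
qed

lemma valid_concat: "(\<And>x. x \<in> set xs \<Longrightarrow> valid Bd d n (G x)) \<Longrightarrow> valid Bd d n (concat (map G xs))"
  by (induction xs) (auto simp: valid_append valid_Nil)

lemma Dcomp_concat: "Dcomp sc Bd d n i (concat (map G xs)) z = (\<Sum>x\<leftarrow>xs. Dcomp sc Bd d n i (G x) z)"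
  by (induction xs) (auto simp: Dcomp_append Dcomp_Nil)

lemma Simg_append: "Simg sc Bd d n (r1 @ r2) \<phi>s = Simg sc Bd d n r1 \<phi>s + Simg sc Bd d n r2 \<phi>s"
  by (simp add: Simg_def)

lemma Simg_Nil: "Simg sc Bd d n [] \<phi>s = 0"
  by (simp add: Simg_def)

lemma Simg_concat: "Simg sc Bd d n (concat (map G xs)) \<phi>s = (\<Sum>x\<leftarrow>xs. Simg sc Bd d n (G x) \<phi>s)"
  by (induction xs) (auto simp: Simg_append Simg_Nil)

lemma Simg_rscale: "Simg sc Bd d n (rscale a r) \<phi>s = a * Simg sc Bd d n r \<phi>s"
proof (induction r)
  case Nil
  then show ?case by (simp add: rscale_def Simg_Nil)
next
  case (Cons x r)
  obtain c ws where x: "x = (c, ws)" by fastforce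
  have "Simg sc Bd d n (rscale a (x # r)) \<phi>s = Simg sc Bd d n [(a * c, ws)] \<phi>s + Simg sc Bd d n (rscale a r) \<phi>s"
    using Simg_append[of sc Bd d n "[(a * c, ws)]" "rscale a r" \<phi>s] by (simp add: rscale_def x)
  moreover have "Simg sc Bd d n (x # r) \<phi>s = Simg sc Bd d n [(c, ws)] \<phi>s + Simg sc Bd d n r \<phi>s"
    using Simg_append[of sc Bd d n "[(c, ws)]" r \<phi>s] by (simp add: x)
  moreover have "Simg sc Bd d n [(a * c, ws)] \<phi>s = a * Simg sc Bd d n [(c, ws)] \<phi>s"
    by (simp add: Simg_def)
  ultimately show ?case using Cons by (simp add: algebra_simps)
qed

lemma Simg_usub:
  assumes SGA: "std_graded_algebra sc Bd" and u: "u \<in> Bd e" and v: "valid Bd d n r"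
    and len: "length \<phi>s = n" and set: "set \<phi>s \<subseteq> Dual sc Bd (e + d)"
  shows "Simg sc Bd (e + d) n (usub u r) \<phi>s = Simg sc Bd d n r (map (\<lambda>\<psi> x. \<psi> (u * x)) \<phi>s)"
proof -
  have set': "set (map (\<lambda>\<psi> x. \<psi> (u * x)) \<phi>s) \<subseteq> Dual sc Bd d"
    using set Dual_mult_left[OF SGA _ u] by auto
  have "(\<Sum>(c, ws)\<leftarrow>usub u r'. c * (\<Sum>\<tau>\<in>{\<tau>. \<tau> permutes {..<n}}. \<Prod>i<n. (\<phi>s ! i) (ws ! \<tau> i)))
     = (\<Sum>(c, ws)\<leftarrow>r'. c * (\<Sum>\<tau>\<in>{\<tau>. \<tau> permutes {..<n}}. \<Prod>i<n. (map (\<lambda>\<psi> x. \<psi> (u * x)) \<phi>s ! i) (ws ! \<tau> i)))"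
    if "valid Bd d n r'" for r'
    using that
  proof (induction r')
    case Nil
    then show ?case by (simp add: usub_def)
  next
    case (Cons x r')
    obtain c ws where x: "x = (c, ws)" by fastforce
    from Cons.prems have lw: "length ws = n" and vr: "valid Bd d n r'" by (auto simp: x valid_Cons)
    have "(\<Prod>i<n. (\<phi>s ! i) (map ((*) u) ws ! \<tau> i)) = (\<Prod>i<n. (map (\<lambda>\<psi> x. \<psi> (u * x)) \<phi>s ! i) (ws ! \<tau> i))"
      if p: "\<tau> permutes {..<n}" for \<tau>
    proof (rule prod.cong[OF refl])
      fix i assume i: "i \<in> {..<n}"
      then have "\<tau> i < n" using permutes_in_image[OF p] by simp
      then show "(\<phi>s ! i) (map ((*) u) ws ! \<tau> i) = (map (\<lambda>\<psi> x. \<psi> (u * x)) \<phi>s ! i) (ws ! \<tau> i)"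
        using i lw len by simp
    qed
    then show ?case using Cons.IH[OF vr] by (simp add: x usub_def)
  qed
  then show ?thesis using v len set set' by (simp add: Simg_def)
qed

lemma sum_list_addf2:
  fixes f g :: "_ \<Rightarrow> 'a::comm_monoid_add"
  shows "(\<Sum>x\<leftarrow>xs. f x + g x) = (\<Sum>x\<leftarrow>xs. f x) + (\<Sum>x\<leftarrow>xs. g x)"
  by (induction xs) (simp_all add: add_ac)

lemma Simg_main_eq:
  fixes sc :: "'k::field_char_0 \<Rightarrow> 'b::comm_ring_1 \<Rightarrow> 'b"
  assumes SGA: "std_graded_algebra sc Bd"
    and vf: "valid Bd d n rf" and vr: "valid Bd d n r'" and fr: "Simg sc Bd d n r' = tensel sc Bd d n rf"
    and vg: "valid Bd e n rg"
    and Ru: "\<forall>x\<in>set R. snd x \<in> Bd e"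
    and RR: "\<forall>\<phi>s. length \<phi>s = n \<longrightarrow> set \<phi>s \<subseteq> Dual sc Bd e \<longrightarrow>
       tensel sc Bd e n rg \<phi>s = (\<Sum>(a, u)\<leftarrow>R. a * (\<Prod>i<n. (\<phi>s ! i) u))"
  shows "Simg sc Bd (e + d) n (concat (map (\<lambda>x. rscale (fst x) (usub (snd x) r')) R)) = tensel sc Bd (e + d) n (tprod rg rf)"
proof (rule ext)
  fix \<phi>s :: "('b \<Rightarrow> 'k) list"
  show "Simg sc Bd (e + d) n (concat (map (\<lambda>x. rscale (fst x) (usub (snd x) r')) R)) \<phi>s = tensel sc Bd (e + d) n (tprod rg rf) \<phi>s"
  proof (cases "length \<phi>s = n \<and> set \<phi>s \<subseteq> Dual sc Bd (e + d)")
    case True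
    then have len: "length \<phi>s = n" and set: "set \<phi>s \<subseteq> Dual sc Bd (e + d)" by auto
    define W where "W = (\<lambda>u rf'. (\<Sum>(c', vs)\<leftarrow>rf'. c' * (\<Prod>i<n. (\<phi>s ! i) (u * vs ! i))))"
    have Wt: "W u rf = tensel sc Bd d n rf (map (\<lambda>\<psi> x. \<psi> (u * x)) \<phi>s)" if u: "u \<in> Bd e" for u
    proof -
      have set': "set (map (\<lambda>\<psi> x. \<psi> (u * x)) \<phi>s) \<subseteq> Dual sc Bd d"
        using set Dual_mult_left[OF SGA _ u] by auto
      show ?thesis using len set' by (simp add: tensel_def W_def)
    qed
    have L: "Simg sc Bd (e + d) n (concat (map (\<lambda>x. rscale (fst x) (usub (snd x) r')) R)) \<phi>s
        = (\<Sum>x\<leftarrow>R. fst x * W (snd x) rf)"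
      unfolding Simg_concat Simg_rscale
    proof (rule arg_cong[where f=sum_list], rule map_cong[OF refl])
      fix x assume "x \<in> set R"
      then have u: "snd x \<in> Bd e" using Ru by blast
      show "fst x * Simg sc Bd (e + d) n (usub (snd x) r') \<phi>s = fst x * W (snd x) rf"
        using Simg_usub[OF SGA u vr len set] fr Wt[OF u] by simp
    qed
    have "(\<Sum>(c, us)\<leftarrow>rg. \<Sum>(c', vs)\<leftarrow>rf'. c * c' * (\<Prod>i<n. (\<phi>s ! i) (us ! i * vs ! i)))
        = (\<Sum>x\<leftarrow>R. fst x * W (snd x) rf')" if "valid Bd d n rf'" for rf'
      using that
    proof (induction rf')
      case Nil
      then show ?case by (simp add: W_def)
    next
      case (Cons y rf')
      obtain c' vs where y: "y = (c', vs)" by fastforce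
      from Cons.prems have lv: "length vs = n" and svs: "set vs \<subseteq> Bd d" and vr': "valid Bd d n rf'"
        by (auto simp: y valid_Cons)
      define \<chi>s where "\<chi>s = map (\<lambda>j x. (\<phi>s ! j) (x * vs ! j)) [0..<n]"
      have lc: "length \<chi>s = n" by (simp add: \<chi>s_def)
      have sc': "set \<chi>s \<subseteq> Dual sc Bd e"
      proof
        fix \<chi> assume "\<chi> \<in> set \<chi>s"
        then obtain j where j: "j < n" "\<chi> = (\<lambda>x. (\<phi>s ! j) (x * vs ! j))" by (auto simp: \<chi>s_def)
        have "\<phi>s ! j \<in> Dual sc Bd (e + d)" using j len set by (auto simp: subset_iff)
        moreover have "vs ! j \<in> Bd d" using j lv svs by (auto simp: subset_iff)
        ultimately show "\<chi> \<in> Dual sc Bd e" using Dual_mult_right[OF SGA] j(2) by blast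
      qed
      have A: "(\<Sum>(c, us)\<leftarrow>rg. c * c' * (\<Prod>i<n. (\<phi>s ! i) (us ! i * vs ! i)))
          = c' * tensel sc Bd e n rg \<chi>s"
      proof -
        have "(\<Sum>(c, us)\<leftarrow>rg'. c * c' * (\<Prod>i<n. (\<phi>s ! i) (us ! i * vs ! i)))
            = c' * (\<Sum>(c, us)\<leftarrow>rg'. c * (\<Prod>i<n. (\<chi>s ! i) (us ! i)))" for rg'
          by (induction rg') (auto simp: \<chi>s_def algebra_simps)
        then show ?thesis using lc sc' by (simp add: tensel_def)
      qed
      have B: "c' * tensel sc Bd e n rg \<chi>s = (\<Sum>x\<leftarrow>R. fst x * (c' * (\<Prod>i<n. (\<phi>s ! i) (snd x * vs ! i))))"
      proof -
        have "(\<Sum>(a, u)\<leftarrow>R'. a * (\<Prod>i<n. (\<chi>s ! i) u)) * c' = (\<Sum>x\<leftarrow>R'. fst x * (c' * (\<Prod>i<n. (\<phi>s ! i) (snd x * vs ! i))))" for R'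
          by (induction R') (auto simp: \<chi>s_def algebra_simps)
        then show ?thesis using RR lc sc' by (simp add: mult.commute)
      qed
      have "(\<Sum>(c, us)\<leftarrow>rg. \<Sum>(c', vs)\<leftarrow>y # rf'. c * c' * (\<Prod>i<n. (\<phi>s ! i) (us ! i * vs ! i)))
          = (\<Sum>(c, us)\<leftarrow>rg. c * c' * (\<Prod>i<n. (\<phi>s ! i) (us ! i * vs ! i)))
          + (\<Sum>(c, us)\<leftarrow>rg. \<Sum>(c', vs)\<leftarrow>rf'. c * c' * (\<Prod>i<n. (\<phi>s ! i) (us ! i * vs ! i)))"
        by (simp add: y split_def sum_list_addf2)
      also have "\<dots> = (\<Sum>x\<leftarrow>R. fst x * (c' * (\<Prod>i<n. (\<phi>s ! i) (snd x * vs ! i)))) + (\<Sum>x\<leftarrow>R. fst x * W (snd x) rf')"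
        using A B Cons.IH[OF vr'] by simp
      also have "\<dots> = (\<Sum>x\<leftarrow>R. fst x * W (snd x) (y # rf'))"
        by (simp add: W_def y sum_list_addf2[symmetric] algebra_simps)
      finally show ?case .
    qed
    then have "tensel sc Bd (e + d) n (tprod rg rf) \<phi>s = (\<Sum>x\<leftarrow>R. fst x * W (snd x) rf)"
      using tensel_tprod[OF vg vf len set] vf by simp
    then show ?thesis using L by simp
  next
    case False
    then show ?thesis unfolding Simg_def tensel_def by auto
  qed
qed

lemma di_is_ideal: "di_ideal sc Bd I \<Longrightarrow> is_ideal sc Bd I"
  by (simp add: di_ideal_def)

lemma join_usub:
  fixes sc :: "'k::field_char_0 \<Rightarrow> 'b::comm_ring_1 \<Rightarrow> 'b"
  assumes SGA: "std_graded_algebra sc Bd" and dI: "di_ideal sc Bd I" and dJ: "di_ideal sc Bd J"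
    and vr: "valid Bd d n r'" and jr: "symel sc Bd d r' \<in> join sc Bd I J d n"
    and u: "u \<in> Bd e" and i: "i \<le> n"
  shows "Dcomp sc Bd (e + d) n i (usub u r') \<in> spanF (Xt sc Bd I J (e + d) n i)"
  unfolding Dcomp_usub[OF SGA u vr]
proof (rule spanF_subst[OF joinD[OF jr vr refl i]])
  fix g assume g: "g \<in> Xt sc Bd I J d n i"
  then obtain A B where gAB: "g = (\<lambda>(\<phi>, \<psi>). A \<phi> * B \<psi>)"
    and cases: "(A \<in> I d i \<and> B \<in> SymP sc Bd d (n - i)) \<or> (A \<in> SymP sc Bd d i \<and> B \<in> J d (n - i))"
    by (auto simp: tens2_def)
  have AS: "A \<in> SymP sc Bd d i" using cases is_ideal_sub[OF di_is_ideal[OF dI]] by blast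
  have BS: "B \<in> SymP sc Bd d (n - i)" using cases is_ideal_sub[OF di_is_ideal[OF dJ]] by blast
  obtain p where vp: "valid Bd d i p" and Ap: "A = symel sc Bd d p" using AS by (metis SymP_E)
  obtain q where vq: "valid Bd d (n - i) q" and Bq: "B = symel sc Bd d q" using BS by (metis SymP_E)
  have eq: "(\<lambda>z. if fst z \<in> Dual sc Bd (e + d) \<and> snd z \<in> Dual sc Bd (e + d)
         then g ((\<lambda>x. fst z (u * x)), (\<lambda>x. snd z (u * x))) else 0)
     = (\<lambda>(\<phi>, \<psi>). symel sc Bd (e + d) (usub u p) \<phi> * symel sc Bd (e + d) (usub u q) \<psi>)"
    by (auto simp: fun_eq_iff gAB Ap Bq symel_usub[OF SGA u])
  have sp: "symel sc Bd (e + d) (usub u p) \<in> SymP sc Bd (e + d) i"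
    by (rule SymP_I[OF valid_usub[OF SGA u vp]])
  have sq: "symel sc Bd (e + d) (usub u q) \<in> SymP sc Bd (e + d) (n - i)"
    by (rule SymP_I[OF valid_usub[OF SGA u vq]])
  from cases show "(\<lambda>z. if fst z \<in> Dual sc Bd (e + d) \<and> snd z \<in> Dual sc Bd (e + d)
         then g ((\<lambda>x. fst z (u * x)), (\<lambda>x. snd z (u * x))) else 0) \<in> spanF (Xt sc Bd I J (e + d) n i)"
    unfolding eq
  proof
    assume "A \<in> I d i \<and> B \<in> SymP sc Bd d (n - i)"
    then have "symel sc Bd (e + d) (usub u p) \<in> I (e + d) i"
      using di_usub[OF SGA dI vp _ u] Ap by blast
    then show "(\<lambda>(\<phi>, \<psi>). symel sc Bd (e + d) (usub u p) \<phi> * symel sc Bd (e + d) (usub u q) \<psi>) \<in> spanF (Xt sc Bd I J (e + d) n i)"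
      using sq by (intro spanF_gen UnI1 tens2_I)
  next
    assume "A \<in> SymP sc Bd d i \<and> B \<in> J d (n - i)"
    then have "symel sc Bd (e + d) (usub u q) \<in> J (e + d) (n - i)"
      using di_usub[OF SGA dJ vq _ u] Bq by blast
    then show "(\<lambda>(\<phi>, \<psi>). symel sc Bd (e + d) (usub u p) \<phi> * symel sc Bd (e + d) (usub u q) \<psi>) \<in> spanF (Xt sc Bd I J (e + d) n i)"
      using sp by (intro spanF_gen UnI2 tens2_I)
  qed
qed

lemma join_di:
  fixes sc :: "'k::field_char_0 \<Rightarrow> 'b::comm_ring_1 \<Rightarrow> 'b"
  assumes SGA: "std_graded_algebra sc Bd" and dI: "di_ideal sc Bd I" and dJ: "di_ideal sc Bd J"
    and vf: "valid Bd d n rf" and SIf: "tensel sc Bd d n rf \<in> SI sc Bd (join sc Bd I J) d n"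
    and vg: "valid Bd e n rg" and TI: "tensel sc Bd e n rg \<in> TensInv sc Bd e n"
  shows "tensel sc Bd (e + d) n (tprod rg rf) \<in> SI sc Bd (join sc Bd I J) (e + d) n"
proof -
  from SIf obtain r' where vr: "valid Bd d n r'" and jr: "symel sc Bd d r' \<in> join sc Bd I J d n"
    and fr: "Simg sc Bd d n r' = tensel sc Bd d n rf"
    unfolding SI_def by auto
  from TI have sym: "\<forall>\<sigma>. \<sigma> permutes {..<n} \<longrightarrow> (\<forall>\<phi>s. length \<phi>s = n \<longrightarrow>
       tensel sc Bd e n rg (map (\<lambda>i. \<phi>s ! \<sigma> i) [0..<n]) = tensel sc Bd e n rg \<phi>s)"
    unfolding TensInv_def mem_Collect_eq by blast
  obtain R where Ru: "\<forall>x\<in>set R. snd x \<in> Bd e"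
    and RR: "\<forall>\<phi>s. length \<phi>s = n \<longrightarrow> set \<phi>s \<subseteq> Dual sc Bd e \<longrightarrow>
       tensel sc Bd e n rg \<phi>s = (\<Sum>(a, u)\<leftarrow>R. a * (\<Prod>i<n. (\<phi>s ! i) u))"
    using sym_pure[OF SGA vg sym] by blast
  define r'' where "r'' = concat (map (\<lambda>x. rscale (fst x) (usub (snd x) r')) R)"
  have vr'': "valid Bd (e + d) n r''"
    unfolding r''_def
    by (rule valid_concat, rule valid_rscale, rule valid_usub[OF SGA _ vr]) (use Ru in blast)
  have eq: "Simg sc Bd (e + d) n r'' = tensel sc Bd (e + d) n (tprod rg rf)"
    unfolding r''_def by (rule Simg_main_eq[OF SGA vf vr fr vg Ru RR])
  have "symel sc Bd (e + d) r'' \<in> join sc Bd I J (e + d) n"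
  proof (rule joinI[OF vr'' refl])
    fix i assume i: "i \<le> n"
    have "Dcomp sc Bd (e + d) n i r'' = (\<lambda>z. \<Sum>x\<leftarrow>R. fst x * Dcomp sc Bd (e + d) n i (usub (snd x) r') z)"
      unfolding r''_def by (simp add: fun_eq_iff Dcomp_concat Dcomp_rscale)
    also have "\<dots> \<in> spanF (Xt sc Bd I J (e + d) n i)"
    proof (rule spanF_sum_list)
      fix x assume "x \<in> set R"
      then have u: "snd x \<in> Bd e" using Ru by blast
      show "(\<lambda>z. fst x * Dcomp sc Bd (e + d) n i (usub (snd x) r') z) \<in> spanF (Xt sc Bd I J (e + d) n i)"
        by (rule spanF_scale[OF join_usub[OF SGA dI dJ vr jr u i]])
    qed
    finally show "Dcomp sc Bd (e + d) n i r'' \<in> spanF (Xt sc Bd I J (e + d) n i)" .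
  qed
  then show ?thesis
    unfolding SI_def using vr'' eq[symmetric] by blast
qed

theorem proposition4p2:
  fixes sc :: "'k::field_char_0 \<Rightarrow> 'b::comm_ring_1 \<Rightarrow> 'b"
    and Bd :: "nat \<Rightarrow> 'b set"
    and I J :: "nat \<Rightarrow> nat \<Rightarrow> (('b \<Rightarrow> 'k) \<Rightarrow> 'k) set"
  assumes "std_graded_algebra sc Bd"
    and "di_ideal sc Bd I"
    and "di_ideal sc Bd J"
  shows "di_ideal sc Bd (join sc Bd I J)"
  unfolding di_ideal_def
proof (intro conjI allI impI)
  show "is_ideal sc Bd (join sc Bd I J)"
    by (rule join_is_ideal[OF di_is_ideal[OF assms(2)] di_is_ideal[OF assms(3)]])
  fix d e n rf rg
  assume "valid Bd d n rf" "tensel sc Bd d n rf \<in> SI sc Bd (join sc Bd I J) d n"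
    "valid Bd e n rg" "tensel sc Bd e n rg \<in> TensInv sc Bd e n"
  then show "tensel sc Bd (e + d) n (tprod rg rf) \<in> SI sc Bd (join sc Bd I J) (e + d) n"
    by (rule join_di[OF assms])
qed

end
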